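(* With the two-meter post-selected state $|\Phi_f\rangle=\langle\psi_f|\hat T_{f,2}\,e^{-\imath g\hat A_2\otimes\hat p_2/\hbar}\,\hat T_{2,1}\,e^{-\imath g\hat A_1\otimes\hat p_1/\hbar}\,\hat T_{1,i}\,|\psi_i\rangle|\phi\rangle_1|\phi\rangle_2$, let $\langle x_1k_2\rangle$ be the mean of $x_1k_2$ in the normalized distribution $|\langle x_1,k_2|\Phi_f\rangle|^2$ (meter 1 in position representation, meter 2 in wave-number representation), and $\langle k_1x_2\rangle$ the mean of $k_1x_2$ in the normalized distribution $|\langle k_1,x_2|\Phi_f\rangle|^2$. Then, as $g\to0$, $$\langle x_1k_2\rangle=\frac{g^2}{4\sigma^2}\mathrm{Im}\Big[(A_2,A_1)_w-(A_1)_w\overline{(A_2)_w}\Big]+O(g^3),$$ $$\langle k_1x_2\rangle=\frac{g^2}{4\sigma^2}\mathrm{Im}\Big[(A_2,A_1)_w+(A_1)_w\overline{(A_2)_w}\Big]+O(g^3),$$ and consequently $$\mathrm{Im}\big[(A_2,A_1)_w\big]=\frac{2\sigma^2}{g^2}\Big(\langle x_1k_2\rangle+\langle k_1x_2\rangle\Big)+O(g).$$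
   Context: $\mathcal H$ is a finite-dimensional system Hilbert space with self-adjoint operators $\hat A_1,\hat A_2$; times $t_i<t_1<t_2<t_f$ with unitary system evolutions $\hat T_{b,a}$ satisfying $\hat T_{c,b}\hat T_{b,a}=\hat T_{c,a}$; unit vectors $|\psi_i\rangle,|\psi_f\rangle$ with $\langle\psi_f|\hat T_{f,i}|\psi_i\rangle\neq0$. Weak values: $(A_1)_w=\langle\psi_f|\hat T_{f,1}\hat A_1\hat T_{1,i}|\psi_i\rangle/\langle\psi_f|\hat T_{f,i}|\psi_i\rangle$, $(A_2)_w=\langle\psi_f|\hat T_{f,2}\hat A_2\hat T_{2,i}|\psi_i\rangle/\langle\psi_f|\hat T_{f,i}|\psi_i\rangle$, and the sequential weak value $(A_2,A_1)_w=\langle\psi_f|\hat T_{f,2}\hat A_2\hat T_{2,1}\hat A_1\hat T_{1,i}|\psi_i\rangle/\langle\psi_f|\hat T_{f,i}|\psi_i\rangle$; $\overline{z}$ denotes complex conjugation. Each meter $r=1,2$ is a particle on $\mathbb R$ with position $\hat x_r$, momentum $\hat p_r=\hbar\hat k_r=-\imath\hbar\,\partial/\partial x_r$, initially in the real Gaussian $\phi(x)=(2\pi\sigma^2)^{-1/4}e^{-x^2/(4\sigma^2)}$ ($\sigma>0$), with wave-number representation $\tilde\phi(k)=(2\sigma^2/\pi)^{1/4}e^{-k^2\sigma^2}$; meters have no free Hamiltonian; $g>0$ is the small coupling constant. *)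

theory Defs
  imports "HOL-Analysis.Analysis" "HOL-Library.Landau_Symbols"
begin

definition braket :: "complex ^ 'n \<Rightarrow> complex ^ 'n \<Rightarrow> complex" where
  "braket u v = (\<Sum>j\<in>UNIV. cnj (u $ j) * v $ j)"

definition adjoint_mat :: "complex ^ 'n ^ 'n \<Rightarrow> complex ^ 'n ^ 'n" where
  "adjoint_mat M = (\<chi> i j. cnj (M $ j $ i))"

definition self_adjoint :: "complex ^ 'n ^ 'n \<Rightarrow> bool" where
  "self_adjoint M \<longleftrightarrow> adjoint_mat M = M"

definition unitary_mat :: "complex ^ 'n ^ 'n \<Rightarrow> bool" where
  "unitary_mat U \<longleftrightarrow> adjoint_mat U ** U = mat 1 \<and> U ** adjoint_mat U = mat 1"

definition cscale_mat :: "complex \<Rightarrow> complex ^ 'n ^ 'n \<Rightarrow> complex ^ 'n ^ 'n" where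
  "cscale_mat c M = (\<chi> i j. c * M $ i $ j)"

primrec matpow :: "complex ^ 'n ^ 'n \<Rightarrow> nat \<Rightarrow> complex ^ 'n ^ 'n" where
  "matpow M 0 = mat 1"
| "matpow M (Suc n) = M ** matpow M n"

definition mexp :: "complex ^ 'n ^ 'n \<Rightarrow> complex ^ 'n ^ 'n" where
  "mexp M = (\<Sum>n. (1 / fact n) *\<^sub>R matpow M n)"

text \<open>T b a is the evolution from time a to time b.\<close>

definition weak_value ::
  "(real \<Rightarrow> real \<Rightarrow> complex ^ 'n ^ 'n) \<Rightarrow> real \<Rightarrow> real \<Rightarrow>
   complex ^ 'n \<Rightarrow> complex ^ 'n \<Rightarrow> complex ^ 'n ^ 'n \<Rightarrow> real \<Rightarrow> complex" where
  "weak_value T ti tf psi_i psi_f A t =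
     braket psi_f (T tf t *v (A *v (T t ti *v psi_i))) / braket psi_f (T tf ti *v psi_i)"

definition seq_weak_value ::
  "(real \<Rightarrow> real \<Rightarrow> complex ^ 'n ^ 'n) \<Rightarrow> real \<Rightarrow> real \<Rightarrow> real \<Rightarrow> real \<Rightarrow>
   complex ^ 'n \<Rightarrow> complex ^ 'n \<Rightarrow> complex ^ 'n ^ 'n \<Rightarrow> complex ^ 'n ^ 'n \<Rightarrow> complex" where
  "seq_weak_value T ti t1 t2 tf psi_i psi_f A2 A1 =
     braket psi_f (T tf t2 *v (A2 *v (T t2 t1 *v (A1 *v (T t1 ti *v psi_i)))))
       / braket psi_f (T tf ti *v psi_i)"

text \<open>Wave-number representation of the initial Gaussian meter state.\<close>
definition phi_k :: "real \<Rightarrow> real \<Rightarrow> real" where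
  "phi_k \<sigma> k = (2 * \<sigma>\<^sup>2 / pi) powr (1/4) * exp (- (k\<^sup>2 * \<sigma>\<^sup>2))"

text \<open>The post-selected two-meter state in the wave-number representation of both meters,
  \<langle>k1,k2|\<Phi>_f\<rangle>. Since the momentum operators commute with everything else and the meters have
  no free Hamiltonian, exp(-i g A \<otimes> p/hbar) acts at wave number k as the system operator
  exp(-i g k A).\<close>
definition Phi_kk ::
  "(real \<Rightarrow> real \<Rightarrow> complex ^ 'n ^ 'n) \<Rightarrow> real \<Rightarrow> real \<Rightarrow> real \<Rightarrow> real \<Rightarrow>
   complex ^ 'n \<Rightarrow> complex ^ 'n \<Rightarrow> complex ^ 'n ^ 'n \<Rightarrow> complex ^ 'n ^ 'n \<Rightarrow>
   real \<Rightarrow> real \<Rightarrow> real \<Rightarrow> real \<Rightarrow> complex" where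
  "Phi_kk T ti t1 t2 tf psi_i psi_f A1 A2 \<sigma> g k1 k2 =
     braket psi_f (T tf t2 *v (mexp (cscale_mat (- \<i> * complex_of_real (g * k2)) A2) *v
       (T t2 t1 *v (mexp (cscale_mat (- \<i> * complex_of_real (g * k1)) A1) *v (T t1 ti *v psi_i)))))
     * complex_of_real (phi_k \<sigma> k1) * complex_of_real (phi_k \<sigma> k2)"

text \<open>Mixed representations via \<langle>x|k\<rangle> = exp(i k x)/sqrt(2 pi).\<close>
definition Phi_xk ::
  "(real \<Rightarrow> real \<Rightarrow> complex ^ 'n ^ 'n) \<Rightarrow> real \<Rightarrow> real \<Rightarrow> real \<Rightarrow> real \<Rightarrow>
   complex ^ 'n \<Rightarrow> complex ^ 'n \<Rightarrow> complex ^ 'n ^ 'n \<Rightarrow> complex ^ 'n ^ 'n \<Rightarrow>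
   real \<Rightarrow> real \<Rightarrow> real \<Rightarrow> real \<Rightarrow> complex" where
  "Phi_xk T ti t1 t2 tf psi_i psi_f A1 A2 \<sigma> g x1 k2 =
     (LINT k1|lborel. exp (\<i> * complex_of_real (k1 * x1)) *
        Phi_kk T ti t1 t2 tf psi_i psi_f A1 A2 \<sigma> g k1 k2) / complex_of_real (sqrt (2 * pi))"

definition Phi_kx ::
  "(real \<Rightarrow> real \<Rightarrow> complex ^ 'n ^ 'n) \<Rightarrow> real \<Rightarrow> real \<Rightarrow> real \<Rightarrow> real \<Rightarrow>
   complex ^ 'n \<Rightarrow> complex ^ 'n \<Rightarrow> complex ^ 'n ^ 'n \<Rightarrow> complex ^ 'n ^ 'n \<Rightarrow>
   real \<Rightarrow> real \<Rightarrow> real \<Rightarrow> real \<Rightarrow> complex" where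
  "Phi_kx T ti t1 t2 tf psi_i psi_f A1 A2 \<sigma> g k1 x2 =
     (LINT k2|lborel. exp (\<i> * complex_of_real (k2 * x2)) *
        Phi_kk T ti t1 t2 tf psi_i psi_f A1 A2 \<sigma> g k1 k2) / complex_of_real (sqrt (2 * pi))"

definition mean_prod :: "(real \<Rightarrow> real \<Rightarrow> complex) \<Rightarrow> real" where
  "mean_prod F =
     (LINT z|(lborel :: (real \<times> real) measure). fst z * snd z * (cmod (F (fst z) (snd z)))\<^sup>2)
     / (LINT z|(lborel :: (real \<times> real) measure). (cmod (F (fst z) (snd z)))\<^sup>2)"

end

theory Submission
  imports Defs "HOL-Probability.Probability"
begin

lemma mvc: "(A *v x) $ i = (\<Sum>j\<in>UNIV. A $ i $ j * x $ j)"
  by (simp add: matrix_vector_mult_def)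

lemma braket_add_right: "braket u (v + w) = braket u v + braket u w"
  by (simp add: braket_def distrib_left sum.distrib)
lemma braket_add_left: "braket (u + v) w = braket u w + braket v w"
  by (simp add: braket_def distrib_right sum.distrib)
lemma braket_diff_right: "braket u (v - w) = braket u v - braket u w"
  by (simp add: braket_def right_diff_distrib sum_subtractf)
lemma braket_diff_left: "braket (u - v) w = braket u w - braket v w"
  by (simp add: braket_def left_diff_distrib sum_subtractf)
lemma braket_smult_right: "braket u (c *s v) = c * braket u v"
  by (simp add: braket_def sum_distrib_left algebra_simps)
lemma braket_smult_left: "braket (c *s u) v = cnj c * braket u v"
  by (simp add: braket_def sum_distrib_left algebra_simps)
lemma scaleR_smult: "r *\<^sub>R (v::complex^'n) = complex_of_real r *s v"
  by (simp add: vec_eq_iff scaleR_conv_of_real[where 'a=complex])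
lemma braket_scaleR_right: "braket u (r *\<^sub>R v) = of_real r * braket u v"
  by (simp add: scaleR_smult braket_smult_right)
lemma braket_scaleR_left: "braket (r *\<^sub>R u) v = of_real r * braket u v"
  by (simp add: scaleR_smult braket_smult_left)
lemma braket_zero_right[simp]: "braket u 0 = 0" by (simp add: braket_def)
lemma braket_zero_left[simp]: "braket 0 u = 0" by (simp add: braket_def)
lemma braket_sum_right: "braket u (\<Sum>x\<in>S. f x) = (\<Sum>x\<in>S. braket u (f x))"
  by (induct S rule: infinite_finite_induct) (auto simp: braket_add_right)
lemma braket_sum_left: "braket (\<Sum>x\<in>S. f x) w = (\<Sum>x\<in>S. braket (f x) w)"
  by (induct S rule: infinite_finite_induct) (auto simp: braket_add_left)
lemma braket_cnj: "cnj (braket u v) = braket v u"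
  by (simp add: braket_def mult.commute)

lemma braket_self: "braket v v = complex_of_real ((norm v)^2)"
proof -
  have "(norm v)^2 = (\<Sum>i\<in>UNIV. (cmod (v $ i))^2)"
    by (simp add: norm_vec_def L2_set_def sum_nonneg)
  then have "complex_of_real ((norm v)^2) = (\<Sum>i\<in>UNIV. complex_of_real ((cmod (v $ i))^2))"
    by simp
  also have "\<dots> = braket v v"
    unfolding braket_def complex_norm_square by (simp add: mult.commute)
  finally show ?thesis by simp
qed

lemma braket_self_eq0: "braket v v = 0 \<longleftrightarrow> v = 0"
  by (simp add: braket_self)

lemma sa_entry: "self_adjoint A \<Longrightarrow> A $ i $ j = cnj (A $ j $ i)"
  unfolding self_adjoint_def adjoint_mat_def by (metis vec_lambda_beta)

lemma braket_sa: assumes "self_adjoint A" shows "braket u (A *v v) = braket (A *v u) v"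
proof -
  have "braket u (A *v v) = (\<Sum>i\<in>UNIV. \<Sum>j\<in>UNIV. cnj (u $ i) * A $ i $ j * v $ j)"
    by (simp add: braket_def mvc sum_distrib_left mult.assoc)
  also have "\<dots> = (\<Sum>j\<in>UNIV. \<Sum>i\<in>UNIV. cnj (u $ i) * A $ i $ j * v $ j)"
    by (rule sum.swap)
  also have "\<dots> = (\<Sum>j\<in>UNIV. \<Sum>i\<in>UNIV. cnj (A $ j $ i * u $ i) * v $ j)"
    by (intro sum.cong refl, subst sa_entry[OF assms]) (simp add: mult.commute)
  also have "\<dots> = braket (A *v u) v"
    by (simp add: braket_def mvc sum_distrib_right cnj_sum)
  finally show ?thesis .
qed

lemma mv_smult: "(A::complex^'n^'m) *v (c *s v) = c *s (A *v v)"
  unfolding vec_eq_iff mvc vector_smult_component sum_distrib_left by (simp add: mult.left_commute)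
lemma mv_sum: "A *v (\<Sum>x\<in>S. f x) = (\<Sum>x\<in>S. A *v f x)"
  by (induct S rule: infinite_finite_induct) (auto simp: matrix_vector_right_distrib)
lemma cscale_mv: "cscale_mat c A *v v = c *s (A *v v)"
  by (simp add: vec_eq_iff mvc cscale_mat_def sum_distrib_left mult.assoc)

lemma braket_continuous: "continuous_on S (\<lambda>w. braket u w)"
  unfolding braket_def by (intro continuous_intros)

lemma mv_scaleR: "(A::complex^'n^'m) *v (r *\<^sub>R v) = r *\<^sub>R (A *v v)"
  by (simp add: scaleR_smult mv_smult)

lemma inner_braket: "x \<bullet> y = Re (braket x y)"
  by (simp add: inner_vec_def braket_def inner_complex_def Re_sum)

definition ONE :: "complex^'n^'n \<Rightarrow> (complex^'n) set \<Rightarrow> bool" where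
  "ONE A E \<longleftrightarrow> finite E \<and> (\<forall>e\<in>E. braket e e = 1) \<and> (\<forall>e\<in>E. \<forall>d\<in>E. e \<noteq> d \<longrightarrow> braket e d = 0)
     \<and> (\<forall>e\<in>E. \<exists>l::real. A *v e = complex_of_real l *s e)"

lemma ONE_card: assumes "ONE (A::complex^'n^'n) E" shows "card E \<le> DIM(complex^'n)"
proof -
  have o: "\<forall>e\<in>E. \<forall>d\<in>E. e \<noteq> d \<longrightarrow> braket e d = 0" and n: "\<forall>e\<in>E. braket e e = 1"
    using assms unfolding ONE_def by blast+
  have "pairwise orthogonal E"
    unfolding pairwise_def orthogonal_def inner_braket using o by simp
  moreover have "0 \<notin> E" using n by force
  ultimately have "independent E" by (rule pairwise_orthogonal_independent)
  from independent_bound[OF this] show ?thesis by (rule conjunct2)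
qed

lemma ONE_extend:
  assumes sa: "self_adjoint A" and E: "ONE A E" and v0: "v0 \<noteq> 0" "\<forall>e\<in>E. braket e v0 = 0"
  shows "\<exists>w. w \<notin> E \<and> ONE A (insert w E)"
proof -
  define S where "S = {v. \<forall>e\<in>E. braket e v = 0}"
  have S_eq: "S = (\<Inter>e\<in>E. {v. braket e v = 0})" unfolding S_def by auto
  have "closed {v. braket e v = 0}" for e
    by (rule closed_Collect_eq) (auto intro: braket_continuous continuous_on_const)
  then have cS: "closed S" unfolding S_eq by (intro closed_INT) auto
  define K where "K = S \<inter> sphere 0 1"
  have cK: "compact K" unfolding K_def using cS by (intro closed_Int_compact) auto
  have "(1 / norm v0) *\<^sub>R v0 \<in> K"
    using v0 by (auto simp: K_def S_def braket_scaleR_right)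
  then have neK: "K \<noteq> {}" by auto
  define f where "f w = Re (braket w (A *v w))" for w
  have "continuous_on K f" unfolding f_def braket_def mvc by (intro continuous_intros)
  then obtain v where vK: "v \<in> K" and vmax: "\<And>y. y \<in> K \<Longrightarrow> f y \<le> f v"
    using continuous_attains_sup[OF cK neK] by blast
  have vS: "v \<in> S" and nv: "norm v = 1" using vK by (auto simp: K_def)
  have bvv: "braket v v = 1" using nv by (simp add: braket_self)
  have AvS: "A *v v \<in> S"
  proof -
    { fix e assume e: "e \<in> E"
      then obtain l :: real where l: "A *v e = complex_of_real l *s e" using E unfolding ONE_def by blast
      have "braket e (A *v v) = braket (A *v e) v" by (rule braket_sa[OF sa])
      also have "\<dots> = 0" using vS e by (simp add: l braket_smult_left S_def)
      finally have "braket e (A *v v) = 0" . }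
    then show ?thesis by (auto simp: S_def)
  qed
  define c where "c = braket v (A *v v)"
  define w where "w = A *v v - c *s v"
  have wS: "w \<in> S" using AvS vS by (auto simp: S_def w_def braket_diff_right braket_smult_right)
  have bvw: "braket v w = 0" by (simp add: w_def braket_diff_right braket_smult_right bvv c_def)
  have bwv: "braket w v = 0" using bvw braket_cnj[of v w] by simp
  define X where "X = (norm w)^2"
  have bww: "braket w w = complex_of_real X" by (simp add: X_def braket_self)
  have Av: "A *v v = w + c *s v" by (simp add: w_def)
  have key: "2 * X \<le> t * (f v * X - f w)" if t: "t > 0" for t
  proof -
    define u where "u = v + t *\<^sub>R w"
    have uS: "u \<in> S" using vS wS by (auto simp: S_def u_def braket_add_right braket_scaleR_right)
    have buu: "braket u u = complex_of_real (1 + t^2 * X)"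
      unfolding u_def braket_add_right braket_add_left braket_scaleR_right braket_scaleR_left
        bvv bvw bwv bww by (simp add: power2_eq_square)
    then have nu2: "(norm u)^2 = 1 + t^2 * X" by (metis braket_self of_real_eq_iff)
    have Xnn: "X \<ge> 0" by (simp add: X_def)
    have "(norm u)^2 > 0" unfolding nu2 using Xnn by (simp add: add_pos_nonneg)
    then have nu: "norm u > 0" using norm_ge_zero[of u] by (cases "norm u = 0") auto
    have "(1 / norm u) *\<^sub>R u \<in> K" using uS nu
      by (auto simp: K_def S_def braket_scaleR_right)
    then have le: "f ((1 / norm u) *\<^sub>R u) \<le> f v" by (rule vmax)
    have "f ((1 / norm u) *\<^sub>R u) = f u / (norm u)^2"
      by (simp add: f_def mv_scaleR braket_scaleR_right braket_scaleR_left power2_eq_square)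
    with le nu have fu: "f u \<le> f v * (1 + t^2 * X)"
      by (simp add: nu2[symmetric] pos_divide_le_eq)
    have bwAv: "braket w (A *v v) = complex_of_real X"
      by (simp add: Av braket_add_right braket_smult_right bww bwv)
    have bvAw: "braket v (A *v w) = complex_of_real X"
      by (simp add: braket_sa[OF sa] Av braket_add_left braket_smult_left bww bvw)
    have "braket u (A *v u) = braket v (A *v v) + of_real t * braket v (A *v w)
        + of_real t * braket w (A *v v) + of_real t * of_real t * braket w (A *v w)"
      unfolding u_def mv_scaleR matrix_vector_right_distrib braket_add_right braket_add_left
          braket_scaleR_right braket_scaleR_left by (simp add: ring_distribs)
    then have "f u = f v + 2 * t * X + t^2 * f w"
      by (simp add: f_def bwAv bvAw power2_eq_square)
    with fu have "2 * t * X \<le> t * (t * (f v * X - f w))"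
      by (simp add: algebra_simps power2_eq_square)
    with t show ?thesis by simp
  qed
  have X0: "X = 0"
  proof (rule ccontr)
    assume "X \<noteq> 0"
    then have Xp: "X > 0" by (simp add: X_def)
    define M where "M = f v * X - f w"
    define t where "t = X / (\<bar>M\<bar> + 1)"
    have tp: "t > 0" using Xp by (simp add: t_def add_pos_nonneg)
    have "t * M \<le> t * \<bar>M\<bar>" using tp by (simp add: mult_left_mono)
    also have "\<dots> < X" using Xp by (simp add: t_def field_simps)
    finally have "t * M < 2 * X" using Xp by simp
    with key[OF tp] show False by (simp add: M_def)
  qed
  then have "w = 0" by (simp add: X_def)
  then have Av': "A *v v = c *s v" by (simp add: Av)
  have "cnj c = c" by (simp add: c_def braket_cnj braket_sa[OF sa])
  then have "Im c = 0" by (simp add: complex_eq_iff)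
  then have creal: "c = complex_of_real (Re c)" by (simp add: complex_eq_iff)
  have vnE: "v \<notin> E" using vS bvv by (auto simp: S_def)
  have "ONE A (insert v E)"
    unfolding ONE_def
  proof (intro conjI ballI impI)
    show "finite (insert v E)" using E by (simp add: ONE_def)
  next
    fix e assume "e \<in> insert v E" then show "braket e e = 1" using E bvv by (auto simp: ONE_def)
  next
    fix e d assume "e \<in> insert v E" "d \<in> insert v E" "e \<noteq> d"
    moreover have "braket v d = 0" if "d \<in> E" for d
      using vS that braket_cnj[of d v] by (auto simp: S_def)
    ultimately show "braket e d = 0" using E vS by (auto simp: ONE_def S_def)
  next
    fix e assume "e \<in> insert v E"
    moreover have "A *v v = complex_of_real (Re c) *s v" using Av' creal by simp
    ultimately show "\<exists>l::real. A *v e = complex_of_real l *s e" using E by (auto simp: ONE_def)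
  qed
  with vnE show ?thesis by blast
qed

lemma spectral:
  assumes sa: "self_adjoint (A :: complex^'n^'n)"
  obtains E :: "(complex^'n) set" and lam :: "complex^'n \<Rightarrow> real" where "finite E"
    "\<And>v. v = (\<Sum>e\<in>E. braket e v *s e)" "\<And>e. e \<in> E \<Longrightarrow> A *v e = complex_of_real (lam e) *s e"
proof -
  have "ONE A {}" by (simp add: ONE_def)
  then have "\<exists>E. ONE A E \<and> (\<forall>E'. ONE A E' \<longrightarrow> card E' \<le> card E)"
    by (rule ex_has_greatest_nat[of "ONE A" "{}" card "Suc DIM(complex^'n)"])
       (use ONE_card le_imp_less_Suc in blast)
  then obtain E where E: "ONE A E" and Emax: "\<And>E'. ONE A E' \<Longrightarrow> card E' \<le> card E"
    by blast
  have fin: "finite E" using E by (simp add: ONE_def)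
  have decomp: "v = (\<Sum>e\<in>E. braket e v *s e)" for v
  proof (rule ccontr)
    assume ne: "v \<noteq> (\<Sum>e\<in>E. braket e v *s e)"
    define r where "r = v - (\<Sum>e\<in>E. braket e v *s e)"
    have r0: "r \<noteq> 0" using ne by (simp add: r_def)
    have "braket d r = 0" if d: "d \<in> E" for d
    proof -
      have "braket d (\<Sum>e\<in>E. braket e v *s e) = (\<Sum>e\<in>E. braket e v * braket d e)"
        by (simp add: braket_sum_right braket_smult_right)
      also have "\<dots> = braket d v * braket d d + (\<Sum>e\<in>E-{d}. braket e v * braket d e)"
        by (rule sum.remove[OF fin d])
      also have "(\<Sum>e\<in>E-{d}. braket e v * braket d e) = 0"
        by (rule sum.neutral) (use d E in \<open>auto simp: ONE_def\<close>)
      also have "braket d d = 1" using d E by (simp add: ONE_def)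
      finally show ?thesis by (simp add: r_def braket_diff_right)
    qed
    then have "\<forall>e\<in>E. braket e r = 0" by blast
    from ONE_extend[OF sa E r0 this] obtain w where "w \<notin> E" "ONE A (insert w E)" by blast
    with Emax[of "insert w E"] card_insert_disjoint[OF fin \<open>w \<notin> E\<close>] show False by simp
  qed
  have "\<forall>e\<in>E. \<exists>l::real. A *v e = complex_of_real l *s e" using E by (simp add: ONE_def)
  then have "\<exists>lam. \<forall>e\<in>E. A *v e = complex_of_real (lam e) *s e" by (rule bchoice)
  then obtain lam where "\<forall>e\<in>E. A *v e = complex_of_real (lam e) *s e" by blast
  then show ?thesis using that[OF fin decomp] by blast
qed


lemma matpow_eigen: "(A::complex^'n^'n) *v e = c *s e \<Longrightarrow> matpow A n *v e = c^n *s e"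
proof (induct n)
  case 0 then show ?case by (simp add: matrix_vector_mul_lid)
next
  case (Suc n)
  have "matpow A (Suc n) *v e = A *v (matpow A n *v e)" by (simp add: matrix_vector_mul_assoc)
  also have "\<dots> = c^(Suc n) *s e" using Suc by (simp add: mv_smult vector_smult_assoc mult.commute)
  finally show ?case .
qed

lemma mv_axis: "((M::complex^'n^'m) *v axis j 1) $ i = M $ i $ j"
  by (simp add: mvc axis_def if_distrib cong: if_cong)

lemma braket_axis: "braket e (axis j 1) = cnj (e $ j)"
  by (simp add: braket_def axis_def if_distrib cong: if_cong)

lemma matpow_decomp:
  fixes M :: "complex^'n^'n"
  assumes fin: "finite E" and dec: "\<And>v. v = (\<Sum>e\<in>E. braket e v *s e)"
    and eig: "\<And>e. e \<in> E \<Longrightarrow> M *v e = z e *s e"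
  shows "matpow M n $ i $ j = (\<Sum>e\<in>E. cnj (e $ j) * e $ i * z e ^ n)"
proof -
  have "matpow M n $ i $ j = (matpow M n *v axis j 1) $ i" by (simp add: mv_axis)
  also have "matpow M n *v axis j 1 = (\<Sum>e\<in>E. braket e (axis j 1) *s (matpow M n *v e))"
    by (subst dec) (simp add: mv_sum mv_smult)
  also have "\<dots> = (\<Sum>e\<in>E. (cnj (e $ j) * z e ^ n) *s e)"
    by (intro sum.cong refl) (simp add: braket_axis matpow_eigen[OF eig] vector_smult_assoc)
  finally show ?thesis by (simp add: sum_component mult.commute mult.left_commute)
qed

lemma vec_sums:
  fixes f :: "nat \<Rightarrow> complex^'n^'m"
  assumes "\<And>i j. (\<lambda>n. f n $ i $ j) sums (s $ i $ j)"
  shows "f sums s"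
  unfolding sums_def
proof (rule vec_tendstoI)
  fix i show "((\<lambda>N. (\<Sum>n<N. f n) $ i) \<longlongrightarrow> s $ i) sequentially"
  proof (rule vec_tendstoI)
    fix j show "((\<lambda>N. (\<Sum>n<N. f n) $ i $ j) \<longlongrightarrow> s $ i $ j) sequentially"
      using assms[of i j] unfolding sums_def by (simp add: sum_component)
  qed
qed

lemma mexp_decomp:
  fixes M :: "complex^'n^'n"
  assumes fin: "finite E" and dec: "\<And>v. v = (\<Sum>e\<in>E. braket e v *s e)"
    and eig: "\<And>e. e \<in> E \<Longrightarrow> M *v e = z e *s e"
  shows "mexp M = (\<chi> i j. \<Sum>e\<in>E. cnj (e $ j) * e $ i * exp (z e))"
proof -
  have "(\<lambda>n. (1 / fact n) *\<^sub>R matpow M n) sums (\<chi> i j. \<Sum>e\<in>E. cnj (e $ j) * e $ i * exp (z e))"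
  proof (rule vec_sums)
    fix i j
    have "(\<lambda>n. \<Sum>e\<in>E. cnj (e $ j) * e $ i * (z e ^ n /\<^sub>R fact n)) sums
          (\<Sum>e\<in>E. cnj (e $ j) * e $ i * exp (z e))"
      by (intro sums_sum sums_mult exp_converges)
    moreover have "((1 / fact n) *\<^sub>R matpow M n) $ i $ j =
        (\<Sum>e\<in>E. cnj (e $ j) * e $ i * (z e ^ n /\<^sub>R fact n))" for n
      by (simp add: matpow_decomp[OF fin dec eig] scaleR_sum_right scaleR_conv_of_real[where 'a=complex] sum_divide_distrib field_simps)
    ultimately show "(\<lambda>n. ((1 / fact n) *\<^sub>R matpow M n) $ i $ j) sums
          (\<chi> i j. \<Sum>e\<in>E. cnj (e $ j) * e $ i * exp (z e)) $ i $ j"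
      by simp
  qed
  then show ?thesis unfolding mexp_def by (rule sums_unique[symmetric])
qed

lemma mexp_mv:
  fixes A :: "complex^'n^'n"
  assumes fin: "finite E" and dec: "\<And>v. v = (\<Sum>e\<in>E. braket e v *s e)"
    and eig: "\<And>e. e \<in> E \<Longrightarrow> A *v e = complex_of_real (lam e) *s e"
  shows "mexp (cscale_mat c A) *v v = (\<Sum>e\<in>E. (exp (c * lam e) * braket e v) *s e)"
proof -
  have eig': "cscale_mat c A *v e = (c * lam e) *s e" if "e \<in> E" for e
    using eig[OF that] by (simp add: cscale_mv vector_smult_assoc)
  have me: "mexp (cscale_mat c A) = (\<chi> i j. \<Sum>e\<in>E. cnj (e $ j) * e $ i * exp (c * complex_of_real (lam e)))"
    by (rule mexp_decomp[OF fin dec]) (rule eig')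
  show ?thesis
    unfolding me
    by (simp add: vec_eq_iff mvc sum_component braket_def sum_distrib_left sum_distrib_right
         mult.commute mult.left_commute sum.swap[of _ UNIV E])
qed


definition G :: "real \<Rightarrow> real \<Rightarrow> real" where
  "G \<sigma> y = exp (- (y\<^sup>2) / (4 * \<sigma>\<^sup>2))"

lemma G_prod:
  assumes s: "\<sigma> > 0"
  shows "G \<sigma> (x - a) * G \<sigma> (x - b) =
    sqrt (2 * pi * \<sigma>\<^sup>2) * exp (- ((a - b)\<^sup>2) / (8 * \<sigma>\<^sup>2)) * normal_density ((a + b) / 2) \<sigma> x"
proof -
  have sq: "sqrt (2 * pi * \<sigma>\<^sup>2) * (1 / sqrt (2 * pi * \<sigma>\<^sup>2)) = 1" using s by simp
  have "- ((x - a)\<^sup>2) / (4 * \<sigma>\<^sup>2) + - ((x - b)\<^sup>2) / (4 * \<sigma>\<^sup>2) =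
        - ((a - b)\<^sup>2) / (8 * \<sigma>\<^sup>2) + - (x - (a + b) / 2)\<^sup>2 / (2 * \<sigma>\<^sup>2)"
    using s by (simp add: field_simps power2_eq_square)
  then have "G \<sigma> (x - a) * G \<sigma> (x - b) = exp (- ((a - b)\<^sup>2) / (8 * \<sigma>\<^sup>2)) * exp (- (x - (a + b) / 2)\<^sup>2 / (2 * \<sigma>\<^sup>2))"
    unfolding G_def by (simp add: exp_add[symmetric])
  also have "\<dots> = sqrt (2 * pi * \<sigma>\<^sup>2) * exp (- ((a - b)\<^sup>2) / (8 * \<sigma>\<^sup>2)) * normal_density ((a + b) / 2) \<sigma> x"
    unfolding normal_density_def using sq s by (simp add: field_simps)
  finally show ?thesis .
qed

lemma GX0:
  assumes s: "\<sigma> > 0"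
  shows "integrable lborel (\<lambda>x. G \<sigma> (x - a) * G \<sigma> (x - b))"
    "(LINT x|lborel. G \<sigma> (x - a) * G \<sigma> (x - b)) = sqrt (2 * pi * \<sigma>\<^sup>2) * exp (- ((a - b)\<^sup>2) / (8 * \<sigma>\<^sup>2))"
  using s by (simp_all add: G_prod[OF s])

lemma GX1:
  assumes s: "\<sigma> > 0"
  shows "integrable lborel (\<lambda>x. x * (G \<sigma> (x - a) * G \<sigma> (x - b)))"
    "(LINT x|lborel. x * (G \<sigma> (x - a) * G \<sigma> (x - b))) =
       sqrt (2 * pi * \<sigma>\<^sup>2) * exp (- ((a - b)\<^sup>2) / (8 * \<sigma>\<^sup>2)) * ((a + b) / 2)"
proof -
  have e: "x * (G \<sigma> (x - a) * G \<sigma> (x - b)) = sqrt (2 * pi * \<sigma>\<^sup>2) * exp (- ((a - b)\<^sup>2) / (8 * \<sigma>\<^sup>2)) *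
     (normal_density ((a + b) / 2) \<sigma> x * x)" for x
    by (simp add: G_prod[OF s])
  show "integrable lborel (\<lambda>x. x * (G \<sigma> (x - a) * G \<sigma> (x - b)))"
    unfolding e using integrable_normal_moment_nz_1[OF s] by simp
  show "(LINT x|lborel. x * (G \<sigma> (x - a) * G \<sigma> (x - b))) =
       sqrt (2 * pi * \<sigma>\<^sup>2) * exp (- ((a - b)\<^sup>2) / (8 * \<sigma>\<^sup>2)) * ((a + b) / 2)"
    unfolding e using integral_normal_moment_nz_1[OF s] by simp
qed

lemma exp_sq_lim: assumes c: "c > 0" and F: "filterlim (\<lambda>k::real. k^2) at_top F"
  shows "((\<lambda>k. exp (-(k^2)/c)) \<longlongrightarrow> 0) F"
proof -
  have "filterlim (\<lambda>k. (1/c) * k^2) at_top F"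
    by (rule filterlim_tendsto_pos_mult_at_top[OF tendsto_const _ F]) (use c in simp)
  then have "filterlim (\<lambda>k. - ((1/c) * k^2)) at_bot F"
    by (simp add: filterlim_uminus_at_bot)
  then have "((\<lambda>k. exp (- ((1/c) * k^2))) \<longlongrightarrow> 0) F"
    by (rule filterlim_compose[OF exp_at_bot])
  then show ?thesis by simp
qed
lemma sq_top: "filterlim (\<lambda>k::real. k^2) at_top at_top" "filterlim (\<lambda>k::real. k^2) at_top at_bot"
  by (auto intro: filterlim_pow_at_top filterlim_ident filterlim_pow_at_bot_even)

lemma iexp_lin: "((\<lambda>k. iexp (k * D)) has_vector_derivative (\<i> * of_real D * iexp (k * D))) (at k)"
proof -
  have 1: "((\<lambda>k. k * D) has_vector_derivative D) (at k)"
    unfolding has_real_derivative_iff_has_vector_derivative[symmetric]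
    by (auto intro!: derivative_eq_intros)
  have "((\<lambda>k. iexp (k * D)) has_vector_derivative (D *\<^sub>R (\<i> * iexp (k * D)))) (at k)"
    using vector_diff_chain_at[OF 1 has_vector_derivative_iexp] by (simp add: o_def)
  then show ?thesis by (simp add: scaleR_conv_of_real mult_ac)
qed

lemma nd_deriv: assumes "s \<noteq> 0"
  shows "(normal_density 0 s has_real_derivative (normal_density 0 s k * (- k / s\<^sup>2))) (at k)"
  using assms unfolding normal_density_def
  by (auto intro!: derivative_eq_intros simp: field_simps power2_eq_square)

lemma nd_cont: "continuous_on UNIV (normal_density m s)"
proof -
  have "normal_density m s = (\<lambda>x. 1 / sqrt (2 * pi * s\<^sup>2) * exp (-((x - m)\<^sup>2) * (1 / (2 * s\<^sup>2))))"
    by (rule ext) (simp add: normal_density_def)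
  then show ?thesis by (simp only:) (intro continuous_intros)
qed

lemma nd_isCont: "isCont (\<lambda>x. complex_of_real (normal_density m s x)) x"
proof -
  have "isCont (normal_density m s) x"
    using nd_cont continuous_on_eq_continuous_at open_UNIV UNIV_I by metis
  then show ?thesis by (rule isCont_of_real)
qed

lemma cont_meas: "(\<And>x. isCont f x) \<Longrightarrow> (f::real \<Rightarrow> 'b::{real_normed_vector,second_countable_topology}) \<in> borel_measurable lborel"
  by (simp add: continuous_at_imp_continuous_on borel_measurable_continuous_onI)

lemma nd_scale: assumes s: "s > 0" shows "normal_density 0 s (s * x) = std_normal_density x / s"
proof -
  have "sqrt (2 * pi * s\<^sup>2) = s * sqrt (2 * pi)" using s by (simp add: real_sqrt_mult)
  moreover have "- (s * x - 0)\<^sup>2 / (2 * s\<^sup>2) = - x\<^sup>2 / 2" using s by (simp add: power_mult_distrib)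
  ultimately show ?thesis unfolding normal_density_def by (simp only:) (simp add: mult.commute)
qed

lemma nd_iexp_integrable: assumes s: "s > 0"
  shows "integrable lborel (\<lambda>k. complex_of_real (normal_density 0 s k) * iexp (k * D))"
proof (rule Bochner_Integration.integrable_bound)
  show "integrable lborel (\<lambda>k. normal_density 0 s k)"
    using s by simp
  show "(\<lambda>k. complex_of_real (normal_density 0 s k) * iexp (k * D)) \<in> borel_measurable lborel"
    by (intro cont_meas continuous_intros nd_isCont)
  show "AE x in lborel. norm (complex_of_real (normal_density 0 s x) * iexp (x * D))
      \<le> norm (normal_density 0 s x)"
    by (simp add: norm_mult)
qed

lemma k_nd_iexp_integrable: assumes s: "s > 0"
  shows "integrable lborel (\<lambda>k. complex_of_real k * (complex_of_real (normal_density 0 s k) * iexp (k * D)))"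
proof (rule Bochner_Integration.integrable_bound)
  show "integrable lborel (\<lambda>k. normal_density 0 s k * \<bar>k - 0\<bar> ^ 1)"
    using integrable_normal_moment_abs[OF s, of 0 1] by simp
  show "(\<lambda>k. complex_of_real k * (complex_of_real (normal_density 0 s k) * iexp (k * D))) \<in> borel_measurable lborel"
    by (intro cont_meas continuous_intros nd_isCont)
  show "AE x in lborel. norm (complex_of_real x * (complex_of_real (normal_density 0 s x) * iexp (x * D)))
      \<le> norm (normal_density 0 s x * \<bar>x - 0\<bar> ^ 1)"
    by (simp add: norm_mult)
qed

lemma char_nd: assumes s: "s > 0"
  shows "(LINT k|lborel. complex_of_real (normal_density 0 s k) * iexp (k * D)) =
    complex_of_real (exp (- (s\<^sup>2 * D\<^sup>2) / 2))"
proof -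
  have "char std_normal_distribution (s * D) = complex_of_real (exp (- ((s * D)^2) / 2))"
    by (simp add: char_std_normal_distribution)
  then have std: "(LINT x|lborel. complex_of_real (std_normal_density x) * iexp (x * (s * D))) =
      complex_of_real (exp (- ((s * D)^2) / 2))"
    unfolding char_def
    by (subst (asm) integral_density) (auto simp: scaleR_conv_of_real mult.commute)
  have "(LINT k|lborel. complex_of_real (normal_density 0 s k) * iexp (k * D)) =
     \<bar>s\<bar> *\<^sub>R (LINT x|lborel. complex_of_real (normal_density 0 s (0 + s * x)) * iexp ((0 + s * x) * D))"
    using s by (intro lborel_integral_real_affine) simp
  also have "(\<lambda>x. complex_of_real (normal_density 0 s (0 + s * x)) * iexp ((0 + s * x) * D)) =
      (\<lambda>x. complex_of_real (1 / s) * (complex_of_real (std_normal_density x) * iexp (x * (s * D))))"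
    by (rule ext, simp only: add_0_left nd_scale[OF s]) (simp add: mult_ac)
  also have "\<bar>s\<bar> *\<^sub>R (LINT x|lborel. complex_of_real (1 / s) * (complex_of_real (std_normal_density x) * iexp (x * (s * D))))
      = s *\<^sub>R (LINT x|lborel. complex_of_real (1 / s) * (complex_of_real (std_normal_density x) * iexp (x * (s * D))))"
    using s by simp
  also have "\<dots> = (LINT x|lborel. complex_of_real (std_normal_density x) * iexp (x * (s * D)))"
    using s by (simp add: scaleR_conv_of_real)
  finally show ?thesis using std by (simp add: power_mult_distrib)
qed

lemma kchar_nd: assumes s: "s > 0"
  shows "(LINT k|lborel. complex_of_real k * (complex_of_real (normal_density 0 s k) * iexp (k * D))) =
    \<i> * complex_of_real (D * s\<^sup>2) * complex_of_real (exp (- (s\<^sup>2 * D\<^sup>2) / 2))"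
proof -
  define F where "F k = complex_of_real (normal_density 0 s k) * iexp (k * D)" for k
  define F' where "F' k = \<i> * complex_of_real D * F k - complex_of_real (1 / s\<^sup>2) * (complex_of_real k * F k)" for k
  have intF: "integrable lborel F" unfolding F_def using nd_iexp_integrable[OF s] .
  have intkF: "integrable lborel (\<lambda>k. complex_of_real k * F k)" unfolding F_def using k_nd_iexp_integrable[OF s] .
  have intF': "integrable lborel F'" unfolding F'_def using intF intkF by simp
  have der: "(F has_vector_derivative F' k) (at k)" for k
  proof -
    have "((\<lambda>k. complex_of_real (normal_density 0 s k)) has_vector_derivative
        complex_of_real (normal_density 0 s k * (- k / s\<^sup>2))) (at k)"
      by (rule has_vector_derivative_of_real[OF nd_deriv]) (use s in simp)
    from has_vector_derivative_mult[OF this iexp_lin[of D k]]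
    show ?thesis unfolding F_def F'_def
      by (rule has_vector_derivative_eq_rhs) (simp add: field_simps)
  qed
  have contF': "isCont F' k" for k
    unfolding F'_def F_def
    by (intro continuous_intros nd_isCont)
  have normF: "norm (F k) = normal_density 0 s k" for k
    unfolding F_def by (simp add: norm_mult)
  have lim: "(F \<longlongrightarrow> 0) at_top" "(F \<longlongrightarrow> 0) at_bot"
  proof -
    have e: "normal_density 0 s k = 1 / sqrt (2 * pi * s\<^sup>2) * exp (- k\<^sup>2 / (2 * s\<^sup>2))" for k
      unfolding normal_density_def by simp
    have c: "2 * s\<^sup>2 > 0" using s by simp
    show "(F \<longlongrightarrow> 0) at_top"
      by (rule tendsto_norm_zero_cancel, unfold normF e)
         (rule tendsto_mult_right_zero[OF exp_sq_lim[OF c sq_top(1)]])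
    show "(F \<longlongrightarrow> 0) at_bot"
      by (rule tendsto_norm_zero_cancel, unfold normF e)
         (rule tendsto_mult_right_zero[OF exp_sq_lim[OF c sq_top(2)]])
  qed
  have "(LBINT x=-\<infinity>..\<infinity>. F' x) = 0 - 0"
  proof (rule interval_integral_FTC_integrable[where F = F])
    show "set_integrable lborel (einterval (- \<infinity>) \<infinity>) F'"
      unfolding set_integrable_def einterval_eq_UNIV using intF' by simp
    show "((F \<circ> real_of_ereal) \<longlongrightarrow> 0) (at_right (- \<infinity>))"
      unfolding ereal_tendsto_simps using lim(2) .
    show "((F \<circ> real_of_ereal) \<longlongrightarrow> 0) (at_left \<infinity>)"
      unfolding ereal_tendsto_simps using lim(1) .
  qed (auto intro: der contF')
  then have "(LINT k|lborel. F' k) = 0"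
    by (simp add: interval_lebesgue_integral_def einterval_eq_UNIV set_lebesgue_integral_def)
  then have "\<i> * complex_of_real D * (LINT k|lborel. F k) = complex_of_real (1 / s\<^sup>2) * (LINT k|lborel. complex_of_real k * F k)"
    unfolding F'_def using intF intkF by simp
  then have "(LINT k|lborel. complex_of_real k * F k) = \<i> * complex_of_real (D * s\<^sup>2) * (LINT k|lborel. F k)"
    using s by (simp add: field_simps)
  then show ?thesis unfolding F_def char_nd[OF s] by simp
qed


lemma prod_int:
  fixes f g :: "real \<Rightarrow> complex"
  assumes f: "integrable lborel f" and g: "integrable lborel g"
  shows "integrable (lborel::(real\<times>real) measure) (\<lambda>z. f (fst z) * g (snd z))"
    "(LINT z|(lborel::(real\<times>real) measure). f (fst z) * g (snd z)) = (LINT x|lborel. f x) * (LINT y|lborel. g y)"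
proof -
  have eq: "(lborel::(real\<times>real) measure) = lborel \<Otimes>\<^sub>M lborel" by (rule lborel_prod[symmetric])
  have fm[measurable]: "f \<in> borel_measurable lborel" and gm[measurable]: "g \<in> borel_measurable lborel"
    using f g by auto
  have m: "(\<lambda>z. f (fst z) * g (snd z)) \<in> borel_measurable (lborel \<Otimes>\<^sub>M lborel)"
    by measurable
  have int: "integrable (lborel \<Otimes>\<^sub>M lborel) (\<lambda>z. f (fst z) * g (snd z))"
  proof (rule lborel_pair.Fubini_integrable[OF m])
    show "integrable lborel (\<lambda>x. LINT y|lborel. norm (f (fst (x, y)) * g (snd (x, y))))"
      using f g by (simp add: norm_mult)
    show "AE x in lborel. integrable lborel (\<lambda>y. f (fst (x, y)) * g (snd (x, y)))"
      using g by simp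
  qed
  then show "integrable (lborel::(real\<times>real) measure) (\<lambda>z. f (fst z) * g (snd z))" by (simp add: eq)
  have "(LINT z|(lborel \<Otimes>\<^sub>M lborel). f (fst z) * g (snd z)) = (LINT x|lborel. LINT y|lborel. f (fst (x,y)) * g (snd (x,y)))"
    by (rule lborel_pair.integral_fst'[OF int, symmetric])
  also have "\<dots> = (LINT x|lborel. f x) * (LINT y|lborel. g y)" by simp
  finally show "(LINT z|(lborel::(real\<times>real) measure). f (fst z) * g (snd z)) = (LINT x|lborel. f x) * (LINT y|lborel. g y)"
    by (simp add: eq)
qed

lemma dsum_int:
  fixes a b :: "'i \<Rightarrow> 'i \<Rightarrow> real \<Rightarrow> complex"
  assumes fin: "finite I"
    and ia: "\<And>p q. p \<in> I \<Longrightarrow> q \<in> I \<Longrightarrow> integrable lborel (a p q)"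
    and ib: "\<And>p q. p \<in> I \<Longrightarrow> q \<in> I \<Longrightarrow> integrable lborel (b p q)"
  shows "integrable (lborel::(real\<times>real) measure) (\<lambda>z. \<Sum>p\<in>I. \<Sum>q\<in>I. c p q * (a p q (fst z) * b p q (snd z)))"
    "(LINT z|(lborel::(real\<times>real) measure). (\<Sum>p\<in>I. \<Sum>q\<in>I. c p q * (a p q (fst z) * b p q (snd z)))) =
     (\<Sum>p\<in>I. \<Sum>q\<in>I. c p q * ((LINT u|lborel. a p q u) * (LINT v|lborel. b p q v)))"
proof -
  have i: "integrable (lborel::(real\<times>real) measure) (\<lambda>z. c p q * (a p q (fst z) * b p q (snd z)))"
    if "p \<in> I" "q \<in> I" for p q
    using prod_int(1)[OF ia[OF that] ib[OF that]] by simp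
  show "integrable (lborel::(real\<times>real) measure) (\<lambda>z. \<Sum>p\<in>I. \<Sum>q\<in>I. c p q * (a p q (fst z) * b p q (snd z)))"
    by (rule Bochner_Integration.integrable_sum, rule Bochner_Integration.integrable_sum, rule i)
  have "(LINT z|(lborel::(real\<times>real) measure). (\<Sum>p\<in>I. \<Sum>q\<in>I. c p q * (a p q (fst z) * b p q (snd z)))) =
     (\<Sum>p\<in>I. LINT z|(lborel::(real\<times>real) measure). (\<Sum>q\<in>I. c p q * (a p q (fst z) * b p q (snd z))))"
    by (intro Bochner_Integration.integral_sum Bochner_Integration.integrable_sum i)
  also have "\<dots> = (\<Sum>p\<in>I. \<Sum>q\<in>I. LINT z|(lborel::(real\<times>real) measure). c p q * (a p q (fst z) * b p q (snd z)))"
    by (intro sum.cong refl Bochner_Integration.integral_sum i)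
  also have "\<dots> = (\<Sum>p\<in>I. \<Sum>q\<in>I. c p q * ((LINT u|lborel. a p q u) * (LINT v|lborel. b p q v)))"
    by (intro sum.cong refl) (simp add: prod_int(2)[OF ia ib])
  finally show "(LINT z|(lborel::(real\<times>real) measure). (\<Sum>p\<in>I. \<Sum>q\<in>I. c p q * (a p q (fst z) * b p q (snd z)))) =
     (\<Sum>p\<in>I. \<Sum>q\<in>I. c p q * ((LINT u|lborel. a p q u) * (LINT v|lborel. b p q v)))" .
qed

lemma cmod_sq_sum:
  fixes f h :: "'i \<Rightarrow> real \<Rightarrow> complex"
  shows "(cmod (K * (\<Sum>p\<in>I. C p * f p u * h p v)))\<^sup>2 =
    Re (\<Sum>p\<in>I. \<Sum>q\<in>I. (complex_of_real ((cmod K)\<^sup>2) * (C p * cnj (C q))) * ((f p u * cnj (f q u)) * (h p v * cnj (h q v))))"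
proof -
  have "complex_of_real ((cmod (K * (\<Sum>p\<in>I. C p * f p u * h p v)))\<^sup>2) =
     (K * (\<Sum>p\<in>I. C p * f p u * h p v)) * cnj (K * (\<Sum>p\<in>I. C p * f p u * h p v))"
    by (rule complex_norm_square)
  also have "\<dots> = (K * cnj K) * ((\<Sum>p\<in>I. C p * f p u * h p v) * (\<Sum>q\<in>I. cnj (C q) * cnj (f q u) * cnj (h q v)))"
    by (simp add: cnj_sum mult_ac)
  also have "(\<Sum>p\<in>I. C p * f p u * h p v) * (\<Sum>q\<in>I. cnj (C q) * cnj (f q u) * cnj (h q v)) =
      (\<Sum>p\<in>I. \<Sum>q\<in>I. (C p * f p u * h p v) * (cnj (C q) * cnj (f q u) * cnj (h q v)))"
    by (rule sum_product)
  also have "(K * cnj K) * (\<Sum>p\<in>I. \<Sum>q\<in>I. (C p * f p u * h p v) * (cnj (C q) * cnj (f q u) * cnj (h q v))) =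
      (\<Sum>p\<in>I. \<Sum>q\<in>I. (K * cnj K) * ((C p * f p u * h p v) * (cnj (C q) * cnj (f q u) * cnj (h q v))))"
    by (simp add: sum_distrib_left)
  also have "\<dots> = (\<Sum>p\<in>I. \<Sum>q\<in>I. (complex_of_real ((cmod K)\<^sup>2) * (C p * cnj (C q))) * ((f p u * cnj (f q u)) * (h p v * cnj (h q v))))"
    by (intro sum.cong refl) (simp add: complex_norm_square[symmetric] mult_ac)
  finally show ?thesis by (metis Re_complex_of_real)
qed

lemma Re_ofr: "Re (complex_of_real r * z) = r * Re z" by simp

lemma mean_prod_formula:
  fixes f h :: "'i \<Rightarrow> real \<Rightarrow> complex"
  assumes fin: "finite I" and K: "K \<noteq> 0"
    and i0: "\<And>p q. p \<in> I \<Longrightarrow> q \<in> I \<Longrightarrow> integrable lborel (\<lambda>u. f p u * cnj (f q u))"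
    and i1: "\<And>p q. p \<in> I \<Longrightarrow> q \<in> I \<Longrightarrow> integrable lborel (\<lambda>u. complex_of_real u * (f p u * cnj (f q u)))"
    and j0: "\<And>p q. p \<in> I \<Longrightarrow> q \<in> I \<Longrightarrow> integrable lborel (\<lambda>v. h p v * cnj (h q v))"
    and j1: "\<And>p q. p \<in> I \<Longrightarrow> q \<in> I \<Longrightarrow> integrable lborel (\<lambda>v. complex_of_real v * (h p v * cnj (h q v)))"
  shows "mean_prod (\<lambda>u v. K * (\<Sum>p\<in>I. C p * f p u * h p v)) =
    (Re (\<Sum>p\<in>I. \<Sum>q\<in>I. C p * cnj (C q) * ((LINT u|lborel. complex_of_real u * (f p u * cnj (f q u))) *
                                            (LINT v|lborel. complex_of_real v * (h p v * cnj (h q v))))) /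
    Re (\<Sum>p\<in>I. \<Sum>q\<in>I. C p * cnj (C q) * ((LINT u|lborel. f p u * cnj (f q u)) *
                                            (LINT v|lborel. h p v * cnj (h q v)))))" (is "_ = ?rhs")
proof -
  define k where "k = complex_of_real ((cmod K)\<^sup>2)"
  have kpos: "(cmod K)\<^sup>2 > 0" using K by simp
  have num: "(\<lambda>z. fst z * snd z * (cmod (K * (\<Sum>p\<in>I. C p * f p (fst z) * h p (snd z))))\<^sup>2) =
     (\<lambda>z. Re (\<Sum>p\<in>I. \<Sum>q\<in>I. (k * (C p * cnj (C q))) * ((complex_of_real (fst z) * (f p (fst z) * cnj (f q (fst z)))) *
        (complex_of_real (snd z) * (h p (snd z) * cnj (h q (snd z)))))))"
  proof
    fix z :: "real \<times> real"
    have "fst z * snd z * (cmod (K * (\<Sum>p\<in>I. C p * f p (fst z) * h p (snd z))))\<^sup>2 =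
      Re (complex_of_real (fst z * snd z) * (\<Sum>p\<in>I. \<Sum>q\<in>I. (k * (C p * cnj (C q))) * ((f p (fst z) * cnj (f q (fst z))) * (h p (snd z) * cnj (h q (snd z))))))"
      unfolding cmod_sq_sum k_def by simp
    also have "\<dots> = Re (\<Sum>p\<in>I. \<Sum>q\<in>I. (k * (C p * cnj (C q))) * ((complex_of_real (fst z) * (f p (fst z) * cnj (f q (fst z)))) *
        (complex_of_real (snd z) * (h p (snd z) * cnj (h q (snd z))))))"
      by (simp add: sum_distrib_left mult_ac)
    finally show "fst z * snd z * (cmod (K * (\<Sum>p\<in>I. C p * f p (fst z) * h p (snd z))))\<^sup>2 = \<dots>" .
  qed
  have den: "(\<lambda>z. (cmod (K * (\<Sum>p\<in>I. C p * f p (fst z) * h p (snd z))))\<^sup>2) =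
     (\<lambda>z. Re (\<Sum>p\<in>I. \<Sum>q\<in>I. (k * (C p * cnj (C q))) * ((f p (fst z) * cnj (f q (fst z))) *
        (h p (snd z) * cnj (h q (snd z))))))"
    unfolding cmod_sq_sum k_def by simp
  have N: "integrable (lborel::(real\<times>real) measure) (\<lambda>z. \<Sum>p\<in>I. \<Sum>q\<in>I. (k * (C p * cnj (C q))) * ((complex_of_real (fst z) * (f p (fst z) * cnj (f q (fst z)))) *
        (complex_of_real (snd z) * (h p (snd z) * cnj (h q (snd z))))))"
    "(LINT z|(lborel::(real\<times>real) measure). (\<Sum>p\<in>I. \<Sum>q\<in>I. (k * (C p * cnj (C q))) * ((complex_of_real (fst z) * (f p (fst z) * cnj (f q (fst z)))) *
        (complex_of_real (snd z) * (h p (snd z) * cnj (h q (snd z))))))) =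
      (\<Sum>p\<in>I. \<Sum>q\<in>I. k * (C p * cnj (C q)) * ((LINT u|lborel. complex_of_real u * (f p u * cnj (f q u))) *
                                            (LINT v|lborel. complex_of_real v * (h p v * cnj (h q v)))))"
    by (rule dsum_int[OF fin, where a = "\<lambda>p q u. complex_of_real u * (f p u * cnj (f q u))"
      and b = "\<lambda>p q v. complex_of_real v * (h p v * cnj (h q v))", simplified], (rule i1 j1; assumption)+)+
  have D: "integrable (lborel::(real\<times>real) measure) (\<lambda>z. \<Sum>p\<in>I. \<Sum>q\<in>I. (k * (C p * cnj (C q))) * ((f p (fst z) * cnj (f q (fst z))) *
        (h p (snd z) * cnj (h q (snd z)))))"
    "(LINT z|(lborel::(real\<times>real) measure). (\<Sum>p\<in>I. \<Sum>q\<in>I. (k * (C p * cnj (C q))) * ((f p (fst z) * cnj (f q (fst z))) *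
        (h p (snd z) * cnj (h q (snd z)))))) =
      (\<Sum>p\<in>I. \<Sum>q\<in>I. k * (C p * cnj (C q)) * ((LINT u|lborel. f p u * cnj (f q u)) *
                                            (LINT v|lborel. h p v * cnj (h q v))))"
    by (rule dsum_int[OF fin, where a = "\<lambda>p q u. f p u * cnj (f q u)"
      and b = "\<lambda>p q v. h p v * cnj (h q v)", simplified], (rule i0 j0; assumption)+)+
  have "mean_prod (\<lambda>u v. K * (\<Sum>p\<in>I. C p * f p u * h p v)) =
    Re (\<Sum>p\<in>I. \<Sum>q\<in>I. k * (C p * cnj (C q)) * ((LINT u|lborel. complex_of_real u * (f p u * cnj (f q u))) *
                                            (LINT v|lborel. complex_of_real v * (h p v * cnj (h q v))))) /
    Re (\<Sum>p\<in>I. \<Sum>q\<in>I. k * (C p * cnj (C q)) * ((LINT u|lborel. f p u * cnj (f q u)) *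
                                            (LINT v|lborel. h p v * cnj (h q v))))"
    unfolding mean_prod_def num den integral_Re[OF N(1)] integral_Re[OF D(1)] N(2) D(2) by simp
  also have "\<dots> = Re (k * (\<Sum>p\<in>I. \<Sum>q\<in>I. C p * cnj (C q) * ((LINT u|lborel. complex_of_real u * (f p u * cnj (f q u))) *
                                            (LINT v|lborel. complex_of_real v * (h p v * cnj (h q v)))))) /
    Re (k * (\<Sum>p\<in>I. \<Sum>q\<in>I. C p * cnj (C q) * ((LINT u|lborel. f p u * cnj (f q u)) *
                                            (LINT v|lborel. h p v * cnj (h q v)))))"
    by (simp add: sum_distrib_left mult_ac)
  also have "\<dots> = ((cmod K)\<^sup>2 * Re (\<Sum>p\<in>I. \<Sum>q\<in>I. C p * cnj (C q) * ((LINT u|lborel. complex_of_real u * (f p u * cnj (f q u))) *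
                                            (LINT v|lborel. complex_of_real v * (h p v * cnj (h q v)))))) /
    ((cmod K)\<^sup>2 * Re (\<Sum>p\<in>I. \<Sum>q\<in>I. C p * cnj (C q) * ((LINT u|lborel. f p u * cnj (f q u)) *
                                            (LINT v|lborel. h p v * cnj (h q v)))))"
    unfolding k_def Re_ofr sum_distrib_left[symmetric] by simp
  also have "\<dots> = ?rhs" using kpos by simp
  finally show ?thesis .
qed


lemma exp_m1_bound: "\<bar>exp (x::real) - 1\<bar> \<le> \<bar>x\<bar> * exp \<bar>x\<bar>"
proof (cases "x \<ge> 0")
  case True
  have "1 - x \<le> exp (-x)" using exp_ge_add_one_self[of "-x"] by simp
  then have "(1 - x) * exp x \<le> exp (-x) * exp x" by (simp add: mult_right_mono)
  then have "(1 - x) * exp x \<le> 1" by (simp add: exp_minus field_simps)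
  then have "exp x - 1 \<le> x * exp x" by (simp add: algebra_simps)
  moreover have "exp x \<ge> 1" using True by simp
  ultimately show ?thesis using True by simp
next
  case False
  have "1 + x \<le> exp x" by (rule exp_ge_add_one_self)
  moreover have "exp x \<le> 1" using False by simp
  moreover have "-x \<le> -x * exp (-x)" using False by simp
  moreover have "\<bar>exp x - 1\<bar> = 1 - exp x" using \<open>exp x \<le> 1\<close> by simp
  moreover have "\<bar>x\<bar> * exp \<bar>x\<bar> = -x * exp (-x)" using False by simp
  ultimately show ?thesis by linarith
qed

lemma E_bigo: "(\<lambda>g::real. exp (-(g\<^sup>2 * w)) - 1) \<in> O[at_right 0](\<lambda>g. g\<^sup>2)"
proof (rule bigoI[where c = "\<bar>w\<bar> * exp \<bar>w\<bar>"])
  show "\<forall>\<^sub>F g in at_right 0. norm (exp (-(g\<^sup>2 * w)) - 1) \<le> \<bar>w\<bar> * exp \<bar>w\<bar> * norm (g\<^sup>2)"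
    using eventually_at_right_real[OF zero_less_one]
  proof eventually_elim
    case (elim g)
    then have g2: "g\<^sup>2 \<le> 1" "g\<^sup>2 \<ge> 0" by (auto simp: power_le_one)
    have "norm (exp (-(g\<^sup>2 * w)) - 1) \<le> \<bar>g\<^sup>2 * w\<bar> * exp \<bar>g\<^sup>2 * w\<bar>"
      using exp_m1_bound[of "-(g\<^sup>2 * w)"] by simp
    also have "\<bar>g\<^sup>2 * w\<bar> = g\<^sup>2 * \<bar>w\<bar>" by (simp add: abs_mult)
    also have "exp (g\<^sup>2 * \<bar>w\<bar>) \<le> exp \<bar>w\<bar>" using g2 by (simp add: mult_left_le_one_le)
    then have "g\<^sup>2 * \<bar>w\<bar> * exp (g\<^sup>2 * \<bar>w\<bar>) \<le> g\<^sup>2 * \<bar>w\<bar> * exp \<bar>w\<bar>"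
      using g2 by (simp add: mult_left_mono)
    finally show ?case by (simp add: mult_ac)
  qed
qed

lemma g4_g3: "(\<lambda>g::real. g\<^sup>2 * g\<^sup>2 * 1) \<in> O[at_right 0](\<lambda>g. g ^ 3)"
proof (rule bigoI[where c = 1])
  show "\<forall>\<^sub>F g in at_right 0. norm ((g::real)\<^sup>2 * g\<^sup>2 * 1) \<le> 1 * norm (g ^ 3)"
    using eventually_at_right_real[OF zero_less_one]
  proof eventually_elim
    case (elim g)
    then have "g * (g * (g * g)) \<le> g * (g * g)" by (simp add: mult_le_cancel_left1 mult_left_le_one_le)
    then show ?case using elim by (simp add: power2_eq_square power3_eq_cube abs_mult)
  qed
qed

lemma asym:
  fixes a b w :: "'i \<Rightarrow> 'i \<Rightarrow> real"
  assumes fin: "finite I" and B0: "(\<Sum>p\<in>I. \<Sum>q\<in>I. b p q) \<noteq> 0"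
  shows "(\<lambda>g. g\<^sup>2 * (\<Sum>p\<in>I. \<Sum>q\<in>I. a p q * exp (-(g\<^sup>2 * w p q))) / (\<Sum>p\<in>I. \<Sum>q\<in>I. b p q * exp (-(g\<^sup>2 * w p q)))
        - g\<^sup>2 * ((\<Sum>p\<in>I. \<Sum>q\<in>I. a p q) / (\<Sum>p\<in>I. \<Sum>q\<in>I. b p q))) \<in> O[at_right 0](\<lambda>g. g ^ 3)"
proof -
  define A0 where "A0 = (\<Sum>p\<in>I. \<Sum>q\<in>I. a p q)"
  define B0' where "B0' = (\<Sum>p\<in>I. \<Sum>q\<in>I. b p q)"
  define B where "B g = (\<Sum>p\<in>I. \<Sum>q\<in>I. b p q * exp (-(g\<^sup>2 * w p q)))" for g :: real
  define A where "A g = (\<Sum>p\<in>I. \<Sum>q\<in>I. a p q * exp (-(g\<^sup>2 * w p q)))" for g :: real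
  define S where "S g = (\<Sum>p\<in>I. \<Sum>q\<in>I. (a p q * B0' - A0 * b p q) * (exp (-(g\<^sup>2 * w p q)) - 1))" for g :: real
  have B0'nz: "B0' \<noteq> 0" using B0 by (simp add: B0'_def)
  have Btend: "(B \<longlongrightarrow> B0') (at_right 0)"
  proof -
    have "(B \<longlongrightarrow> B 0) (at 0)" unfolding B_def by (intro tendsto_intros)
    then have "(B \<longlongrightarrow> B 0) (at_right 0)" by (rule filterlim_mono) (simp_all add: at_le)
    moreover have "B 0 = B0'" by (simp add: B_def B0'_def)
    ultimately show ?thesis by simp
  qed
  then have "eventually (\<lambda>g. B g \<noteq> 0) (at_right 0)"
    using B0'nz by (rule tendsto_imp_eventually_ne)
  then have ev: "eventually (\<lambda>g. g\<^sup>2 * A g / B g - g\<^sup>2 * (A0 / B0') = g\<^sup>2 * S g * (1 / (B g * B0'))) (at_right 0)"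
  proof eventually_elim
    case (elim g)
    have "S g = (\<Sum>p\<in>I. \<Sum>q\<in>I. (a p q * B0' - A0 * b p q) * exp (-(g\<^sup>2 * w p q)))
             - (\<Sum>p\<in>I. \<Sum>q\<in>I. (a p q * B0' - A0 * b p q))"
      by (simp add: S_def right_diff_distrib sum_subtractf)
    also have "(\<Sum>p\<in>I. \<Sum>q\<in>I. (a p q * B0' - A0 * b p q)) = 0"
      by (simp add: sum_subtractf sum_distrib_right[symmetric] sum_distrib_left[symmetric] A0_def B0'_def mult.commute)
    also have "(\<Sum>p\<in>I. \<Sum>q\<in>I. (a p q * B0' - A0 * b p q) * exp (-(g\<^sup>2 * w p q))) = A g * B0' - A0 * B g"
      by (simp add: A_def B_def left_diff_distrib sum_subtractf sum_distrib_right sum_distrib_left mult_ac)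
    finally have Sg: "S g = A g * B0' - A0 * B g" by simp
    have "g\<^sup>2 * A g / B g - g\<^sup>2 * (A0 / B0') = g\<^sup>2 * (A g * B0' - A0 * B g) * (1 / (B g * B0'))"
      using elim B0'nz by (simp add: field_simps)
    then show ?case unfolding Sg .
  qed
  have Sb: "S \<in> O[at_right 0](\<lambda>g. g\<^sup>2)"
    unfolding S_def
  proof (intro big_sum_in_bigo)
    fix p q
    have "(\<lambda>g. (a p q * B0' - A0 * b p q) * (exp (-(g\<^sup>2 * w p q)) - 1)) \<in> O[at_right 0](\<lambda>g. 1 * g\<^sup>2)"
      by (rule landau_o.big.mult[OF bigo_const E_bigo])
    then show "(\<lambda>g. (a p q * B0' - A0 * b p q) * (exp (-(g\<^sup>2 * w p q)) - 1)) \<in> O[at_right 0](\<lambda>g. g\<^sup>2)" by simp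
  qed
  have Ib: "(\<lambda>g. 1 / (B g * B0')) \<in> O[at_right 0](\<lambda>_. 1)"
  proof (rule bigoI_tendsto)
    show "((\<lambda>g. 1 / (B g * B0') / 1) \<longlongrightarrow> 1 / (B0' * B0')) (at_right 0)"
      using B0'nz by (auto intro!: tendsto_intros Btend)
  qed simp
  have "(\<lambda>g. g\<^sup>2 * S g * (1 / (B g * B0'))) \<in> O[at_right 0](\<lambda>g. g\<^sup>2 * g\<^sup>2 * 1)"
    by (intro landau_o.big.mult Sb Ib landau_o.big_refl)
  then have "(\<lambda>g. g\<^sup>2 * S g * (1 / (B g * B0'))) \<in> O[at_right 0](\<lambda>g. g ^ 3)"
    by (rule landau_o.big_trans[OF _ g4_g3])
  then have "(\<lambda>g. g\<^sup>2 * A g / B g - g\<^sup>2 * (A0 / B0')) \<in> O[at_right 0](\<lambda>g. g ^ 3)"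
    using landau_o.big.in_cong[OF ev] by simp
  then show ?thesis by (simp add: A_def B_def A0_def B0'_def)
qed


definition c1 :: "real \<Rightarrow> real" where
  "c1 \<sigma> = (2 * \<sigma>\<^sup>2 / pi) powr (1/4) * sqrt (pi / \<sigma>\<^sup>2)"

lemma c1_pos: "\<sigma> > 0 \<Longrightarrow> c1 \<sigma> > 0"
  unfolding c1_def by simp

lemma phik_nd: assumes s: "\<sigma> > 0"
  shows "phi_k \<sigma> k = c1 \<sigma> * normal_density 0 (1 / (sqrt 2 * \<sigma>)) k"
proof -
  have a: "2 * pi * (1 / (sqrt 2 * \<sigma>))\<^sup>2 = pi / \<sigma>\<^sup>2" using s by (simp add: power_mult_distrib power_divide)
  have q: "(1 / (sqrt 2 * \<sigma>))\<^sup>2 = 1 / (2 * \<sigma>\<^sup>2)" by (simp add: power_divide power_mult_distrib)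
  have b: "- (k - 0)\<^sup>2 / (2 * (1 / (sqrt 2 * \<sigma>))\<^sup>2) = - (k\<^sup>2 * \<sigma>\<^sup>2)" unfolding q using s by (simp add: field_simps)
  have c: "sqrt (pi / \<sigma>\<^sup>2) > 0" using s by simp
  show ?thesis unfolding phi_k_def c1_def normal_density_def a b
    using c by simp
qed

lemma phik_sq: assumes s: "\<sigma> > 0"
  shows "(phi_k \<sigma> k)\<^sup>2 = normal_density 0 (1 / (2 * \<sigma>)) k"
proof -
  have p: "((2 * \<sigma>\<^sup>2 / pi) powr (1/4))\<^sup>2 = sqrt (2 * \<sigma>\<^sup>2 / pi)"
    using s by (simp add: power2_eq_square powr_add[symmetric] powr_half_sqrt)
  have a: "sqrt (2 * \<sigma>\<^sup>2 / pi) = 1 / sqrt (2 * pi * (1 / (2 * \<sigma>))\<^sup>2)"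
    using s by (simp add: power_mult_distrib power_divide real_sqrt_divide field_simps)
  have b: "exp (- (k\<^sup>2 * \<sigma>\<^sup>2)) ^ 2 = exp (- (k - 0)\<^sup>2 / (2 * (1 / (2 * \<sigma>))\<^sup>2))"
    using s by (simp add: exp_double[symmetric] power_mult_distrib power_divide field_simps)
  show ?thesis unfolding phi_k_def normal_density_def power_mult_distrib p a b ..
qed

lemma fourier: assumes s: "\<sigma> > 0"
  shows "integrable lborel (\<lambda>k. complex_of_real (phi_k \<sigma> k) * iexp (k * y))"
    "(LINT k|lborel. complex_of_real (phi_k \<sigma> k) * iexp (k * y)) = complex_of_real (c1 \<sigma> * G \<sigma> y)"
proof -
  have s': "1 / (sqrt 2 * \<sigma>) > 0" using s by simp
  have e: "complex_of_real (phi_k \<sigma> k) * iexp (k * y) =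
      complex_of_real (c1 \<sigma>) * (complex_of_real (normal_density 0 (1 / (sqrt 2 * \<sigma>)) k) * iexp (k * y))" for k
    by (simp add: phik_nd[OF s])
  show "integrable lborel (\<lambda>k. complex_of_real (phi_k \<sigma> k) * iexp (k * y))"
    unfolding e using nd_iexp_integrable[OF s'] by simp
  have g: "exp (- ((1 / (sqrt 2 * \<sigma>))\<^sup>2 * y\<^sup>2) / 2) = G \<sigma> y"
    unfolding G_def using s by (simp add: power_mult_distrib power_divide field_simps)
  show "(LINT k|lborel. complex_of_real (phi_k \<sigma> k) * iexp (k * y)) = complex_of_real (c1 \<sigma> * G \<sigma> y)"
    unfolding e integral_mult_right_zero char_nd[OF s'] g by simp
qed

definition hk :: "real \<Rightarrow> real \<Rightarrow> real \<Rightarrow> real \<Rightarrow> complex" where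
  "hk \<sigma> g b k = exp ((- \<i> * complex_of_real (g * k)) * complex_of_real b) * complex_of_real (phi_k \<sigma> k)"

lemma hk_prod: assumes s: "\<sigma> > 0"
  shows "hk \<sigma> g b k * cnj (hk \<sigma> g b' k) =
    complex_of_real (normal_density 0 (1 / (2 * \<sigma>)) k) * iexp (k * (g * (b' - b)))"
proof -
  have "hk \<sigma> g b k * cnj (hk \<sigma> g b' k) =
     complex_of_real ((phi_k \<sigma> k)\<^sup>2) * (exp ((- \<i> * complex_of_real (g * k)) * complex_of_real b) * exp (\<i> * complex_of_real (g * k) * complex_of_real b'))"
    by (simp add: hk_def exp_cnj power2_eq_square mult_ac)
  also have "exp ((- \<i> * complex_of_real (g * k)) * complex_of_real b) * exp (\<i> * complex_of_real (g * k) * complex_of_real b') =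
       iexp (k * (g * (b' - b)))"
    by (simp add: exp_add[symmetric] algebra_simps)
  finally show ?thesis by (simp add: phik_sq[OF s])
qed

lemma hk_int: assumes s: "\<sigma> > 0"
  shows "integrable lborel (\<lambda>k. hk \<sigma> g b k * cnj (hk \<sigma> g b' k))"
    "integrable lborel (\<lambda>k. complex_of_real k * (hk \<sigma> g b k * cnj (hk \<sigma> g b' k)))"
    "(LINT k|lborel. hk \<sigma> g b k * cnj (hk \<sigma> g b' k)) = complex_of_real (exp (- (g\<^sup>2 * (b - b')\<^sup>2) / (8 * \<sigma>\<^sup>2)))"
    "(LINT k|lborel. complex_of_real k * (hk \<sigma> g b k * cnj (hk \<sigma> g b' k))) =
       \<i> * complex_of_real (g * (b' - b) / (4 * \<sigma>\<^sup>2)) * complex_of_real (exp (- (g\<^sup>2 * (b - b')\<^sup>2) / (8 * \<sigma>\<^sup>2)))"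
proof -
  have s': "1 / (2 * \<sigma>) > 0" using s by simp
  have gg: "(g * (b' - b))\<^sup>2 = g\<^sup>2 * (b - b')\<^sup>2" by (simp add: power_mult_distrib power2_commute)
  have ex: "exp (- ((1 / (2 * \<sigma>))\<^sup>2 * (g * (b' - b))\<^sup>2) / 2) = exp (- (g\<^sup>2 * (b - b')\<^sup>2) / (8 * \<sigma>\<^sup>2))"
    unfolding gg using s by (simp add: power_mult_distrib power_divide field_simps)
  show "integrable lborel (\<lambda>k. hk \<sigma> g b k * cnj (hk \<sigma> g b' k))"
    unfolding hk_prod[OF s] by (rule nd_iexp_integrable[OF s'])
  show "integrable lborel (\<lambda>k. complex_of_real k * (hk \<sigma> g b k * cnj (hk \<sigma> g b' k)))"
    unfolding hk_prod[OF s] by (rule k_nd_iexp_integrable[OF s'])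
  show "(LINT k|lborel. hk \<sigma> g b k * cnj (hk \<sigma> g b' k)) = complex_of_real (exp (- (g\<^sup>2 * (b - b')\<^sup>2) / (8 * \<sigma>\<^sup>2)))"
    unfolding hk_prod[OF s] char_nd[OF s'] ex ..
  have d: "g * (b' - b) * (1 / (2 * \<sigma>))\<^sup>2 = g * (b' - b) / (4 * \<sigma>\<^sup>2)"
    using s by (simp add: power_divide power_mult_distrib)
  show "(LINT k|lborel. complex_of_real k * (hk \<sigma> g b k * cnj (hk \<sigma> g b' k))) =
       \<i> * complex_of_real (g * (b' - b) / (4 * \<sigma>\<^sup>2)) * complex_of_real (exp (- (g\<^sup>2 * (b - b')\<^sup>2) / (8 * \<sigma>\<^sup>2)))"
    unfolding hk_prod[OF s] kchar_nd[OF s'] ex d ..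
qed

definition fx :: "real \<Rightarrow> real \<Rightarrow> real \<Rightarrow> real \<Rightarrow> complex" where
  "fx \<sigma> g a x = complex_of_real (G \<sigma> (x - g * a))"

lemma fx_int: assumes s: "\<sigma> > 0"
  shows "integrable lborel (\<lambda>x. fx \<sigma> g a x * cnj (fx \<sigma> g a' x))"
    "integrable lborel (\<lambda>x. complex_of_real x * (fx \<sigma> g a x * cnj (fx \<sigma> g a' x)))"
    "(LINT x|lborel. fx \<sigma> g a x * cnj (fx \<sigma> g a' x)) =
       complex_of_real (sqrt (2 * pi * \<sigma>\<^sup>2) * exp (- (g\<^sup>2 * (a - a')\<^sup>2) / (8 * \<sigma>\<^sup>2)))"
    "(LINT x|lborel. complex_of_real x * (fx \<sigma> g a x * cnj (fx \<sigma> g a' x))) =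
       complex_of_real (sqrt (2 * pi * \<sigma>\<^sup>2) * exp (- (g\<^sup>2 * (a - a')\<^sup>2) / (8 * \<sigma>\<^sup>2)) * (g * (a + a') / 2))"
proof -
  have e0: "fx \<sigma> g a x * cnj (fx \<sigma> g a' x) = complex_of_real (G \<sigma> (x - g * a) * G \<sigma> (x - g * a'))" for x
    by (simp add: fx_def)
  have e1: "complex_of_real x * (fx \<sigma> g a x * cnj (fx \<sigma> g a' x)) = complex_of_real (x * (G \<sigma> (x - g * a) * G \<sigma> (x - g * a')))" for x
    by (simp add: fx_def)
  have sq: "(g * a - g * a')\<^sup>2 = g\<^sup>2 * (a - a')\<^sup>2" by (simp add: power_mult_distrib[symmetric] right_diff_distrib)
  show "integrable lborel (\<lambda>x. fx \<sigma> g a x * cnj (fx \<sigma> g a' x))"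
    unfolding e0 by (rule integrable_bounded_linear[OF bounded_linear_of_real GX0(1)[OF s]])
  show "integrable lborel (\<lambda>x. complex_of_real x * (fx \<sigma> g a x * cnj (fx \<sigma> g a' x)))"
    unfolding e1 by (rule integrable_bounded_linear[OF bounded_linear_of_real GX1(1)[OF s]])
  show "(LINT x|lborel. fx \<sigma> g a x * cnj (fx \<sigma> g a' x)) =
       complex_of_real (sqrt (2 * pi * \<sigma>\<^sup>2) * exp (- (g\<^sup>2 * (a - a')\<^sup>2) / (8 * \<sigma>\<^sup>2)))"
    unfolding e0 integral_complex_of_real GX0(2)[OF s] sq ..
  show "(LINT x|lborel. complex_of_real x * (fx \<sigma> g a x * cnj (fx \<sigma> g a' x))) =
       complex_of_real (sqrt (2 * pi * \<sigma>\<^sup>2) * exp (- (g\<^sup>2 * (a - a')\<^sup>2) / (8 * \<sigma>\<^sup>2)) * (g * (a + a') / 2))"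
    unfolding e1 integral_complex_of_real GX1(2)[OF s] sq by (simp add: distrib_left)
qed


definition Cf :: "complex^'n \<Rightarrow> complex^'n \<Rightarrow> complex^'n^'n \<Rightarrow> complex^'n^'n \<Rightarrow> complex^'n^'n \<Rightarrow>
    ((complex^'n) \<times> (complex^'n)) \<Rightarrow> complex" where
  "Cf psi_i psi_f U1 U2 U3 p = braket (fst p) (U1 *v psi_i) * braket (snd p) (U2 *v fst p) * braket psi_f (U3 *v snd p)"

lemma amp:
  fixes U1 U2 U3 :: "complex^'n^'n"
  assumes fin1: "finite E1" and fin2: "finite E2"
    and B1: "\<And>x. B1 x = (\<Sum>e\<in>E1. (b1 e * braket e x) *s e)"
    and B2: "\<And>x. B2 x = (\<Sum>d\<in>E2. (b2 d * braket d x) *s d)"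
  shows "braket psi_f (U3 *v B2 (U2 *v B1 (U1 *v psi_i))) =
    (\<Sum>p\<in>E1 \<times> E2. Cf psi_i psi_f U1 U2 U3 p * b1 (fst p) * b2 (snd p))"
proof -
  have s2: "braket psi_f (U3 *v B2 y) = (\<Sum>d\<in>E2. b2 d * braket d y * braket psi_f (U3 *v d))" for y
    by (simp add: B2 mv_sum mv_smult braket_sum_right braket_smult_right mult_ac)
  have s1: "braket d (U2 *v B1 x) = (\<Sum>e\<in>E1. b1 e * braket e x * braket d (U2 *v e))" for d x
    by (simp add: B1 mv_sum mv_smult braket_sum_right braket_smult_right mult_ac)
  have "braket psi_f (U3 *v B2 (U2 *v B1 (U1 *v psi_i))) =
     (\<Sum>d\<in>E2. \<Sum>e\<in>E1. b2 d * (b1 e * braket e (U1 *v psi_i) * braket d (U2 *v e)) * braket psi_f (U3 *v d))"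
    unfolding s2 s1 by (simp add: sum_distrib_left sum_distrib_right)
  also have "\<dots> = (\<Sum>e\<in>E1. \<Sum>d\<in>E2. Cf psi_i psi_f U1 U2 U3 (e, d) * b1 e * b2 d)"
    by (subst sum.swap) (simp add: Cf_def mult_ac)
  also have "\<dots> = (\<Sum>p\<in>E1 \<times> E2. Cf psi_i psi_f U1 U2 U3 p * b1 (fst p) * b2 (snd p))"
    by (simp add: sum.cartesian_product case_prod_beta)
  finally show ?thesis .
qed

lemma exp_comb: "exp (\<i> * complex_of_real (k * x)) * exp ((- \<i> * complex_of_real (g * k)) * complex_of_real a) =
   iexp (k * (x - g * a))"
  by (simp add: exp_add[symmetric] algebra_simps)

lemma xk_form:
  assumes s: "\<sigma> > 0" and fin: "finite I"
    and kk: "\<And>k1 k2. P k1 k2 = (\<Sum>p\<in>I. C p * exp ((- \<i> * complex_of_real (g * k1)) * complex_of_real (\<alpha> p)) *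
        exp ((- \<i> * complex_of_real (g * k2)) * complex_of_real (\<beta> p))) * complex_of_real (phi_k \<sigma> k1) * complex_of_real (phi_k \<sigma> k2)"
  shows "(LINT k1|lborel. exp (\<i> * complex_of_real (k1 * x1)) * P k1 k2) / complex_of_real (sqrt (2 * pi)) =
     complex_of_real (c1 \<sigma> / sqrt (2 * pi)) * (\<Sum>p\<in>I. C p * fx \<sigma> g (\<alpha> p) x1 * hk \<sigma> g (\<beta> p) k2)"
proof -
  have e: "exp (\<i> * complex_of_real (k1 * x1)) * P k1 k2 =
      (\<Sum>p\<in>I. (C p * hk \<sigma> g (\<beta> p) k2) * (complex_of_real (phi_k \<sigma> k1) * iexp (k1 * (x1 - g * \<alpha> p))))" for k1
  proof -
    have "exp (\<i> * complex_of_real (k1 * x1)) * P k1 k2 =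
      (\<Sum>p\<in>I. (C p * hk \<sigma> g (\<beta> p) k2) * complex_of_real (phi_k \<sigma> k1) *
         (exp (\<i> * complex_of_real (k1 * x1)) * exp ((- \<i> * complex_of_real (g * k1)) * complex_of_real (\<alpha> p))))"
      unfolding kk by (simp add: sum_distrib_left sum_distrib_right hk_def mult_ac)
    then show ?thesis unfolding exp_comb by (simp add: mult_ac)
  qed
  have "(LINT k1|lborel. exp (\<i> * complex_of_real (k1 * x1)) * P k1 k2) =
     (\<Sum>p\<in>I. (C p * hk \<sigma> g (\<beta> p) k2) * (LINT k1|lborel. complex_of_real (phi_k \<sigma> k1) * iexp (k1 * (x1 - g * \<alpha> p))))"
    unfolding e by (subst Bochner_Integration.integral_sum)
      (rule integrable_mult_right, rule fourier(1)[OF s], simp)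
  also have "\<dots> = (\<Sum>p\<in>I. (C p * hk \<sigma> g (\<beta> p) k2) * (complex_of_real (c1 \<sigma>) * fx \<sigma> g (\<alpha> p) x1))"
    unfolding fourier(2)[OF s] fx_def by simp
  finally show ?thesis
    by (simp add: sum_distrib_left sum_divide_distrib mult_ac)
qed

lemma kx_form:
  assumes s: "\<sigma> > 0" and fin: "finite I"
    and kk: "\<And>k1 k2. P k1 k2 = (\<Sum>p\<in>I. C p * exp ((- \<i> * complex_of_real (g * k1)) * complex_of_real (\<alpha> p)) *
        exp ((- \<i> * complex_of_real (g * k2)) * complex_of_real (\<beta> p))) * complex_of_real (phi_k \<sigma> k1) * complex_of_real (phi_k \<sigma> k2)"
  shows "(LINT k2|lborel. exp (\<i> * complex_of_real (k2 * x2)) * P k1 k2) / complex_of_real (sqrt (2 * pi)) =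
     complex_of_real (c1 \<sigma> / sqrt (2 * pi)) * (\<Sum>p\<in>I. C p * hk \<sigma> g (\<alpha> p) k1 * fx \<sigma> g (\<beta> p) x2)"
proof -
  have e: "exp (\<i> * complex_of_real (k2 * x2)) * P k1 k2 =
      (\<Sum>p\<in>I. (C p * hk \<sigma> g (\<alpha> p) k1) * (complex_of_real (phi_k \<sigma> k2) * iexp (k2 * (x2 - g * \<beta> p))))" for k2
  proof -
    have "exp (\<i> * complex_of_real (k2 * x2)) * P k1 k2 =
      (\<Sum>p\<in>I. (C p * hk \<sigma> g (\<alpha> p) k1) * complex_of_real (phi_k \<sigma> k2) *
         (exp (\<i> * complex_of_real (k2 * x2)) * exp ((- \<i> * complex_of_real (g * k2)) * complex_of_real (\<beta> p))))"
      unfolding kk by (simp add: sum_distrib_left sum_distrib_right hk_def mult_ac)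
    then show ?thesis unfolding exp_comb by (simp add: mult_ac)
  qed
  have "(LINT k2|lborel. exp (\<i> * complex_of_real (k2 * x2)) * P k1 k2) =
     (\<Sum>p\<in>I. (C p * hk \<sigma> g (\<alpha> p) k1) * (LINT k2|lborel. complex_of_real (phi_k \<sigma> k2) * iexp (k2 * (x2 - g * \<beta> p))))"
    unfolding e by (subst Bochner_Integration.integral_sum)
      (rule integrable_mult_right, rule fourier(1)[OF s], simp)
  also have "\<dots> = (\<Sum>p\<in>I. (C p * hk \<sigma> g (\<alpha> p) k1) * (complex_of_real (c1 \<sigma>) * fx \<sigma> g (\<beta> p) x2))"
    unfolding fourier(2)[OF s] fx_def by simp
  finally show ?thesis
    by (simp add: sum_distrib_left sum_divide_distrib mult_ac)
qed

lemma re_aux: "Re (z * (complex_of_real r1 * (\<i> * complex_of_real r2 * complex_of_real r3))) = r1 * r2 * r3 * Re (\<i> * z)"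
  by (simp add: algebra_simps)
lemma re_aux2: "Re (z * ((\<i> * complex_of_real r2 * complex_of_real r3) * complex_of_real r1)) = r1 * r2 * r3 * Re (\<i> * z)"
  by (simp add: algebra_simps)
lemma re_aux3: "Re (z * (complex_of_real r1 * complex_of_real r2)) = r1 * r2 * Re z"
  by (simp add: algebra_simps)

definition Wf :: "real \<Rightarrow> ('i \<Rightarrow> real) \<Rightarrow> ('i \<Rightarrow> real) \<Rightarrow> 'i \<Rightarrow> 'i \<Rightarrow> real" where
  "Wf \<sigma> \<alpha> \<beta> p q = ((\<alpha> p - \<alpha> q)\<^sup>2 + (\<beta> p - \<beta> q)\<^sup>2) / (8 * \<sigma>\<^sup>2)"

lemma exp_W: assumes s: "\<sigma> > 0"
  shows "exp (- (g\<^sup>2 * (\<alpha> p - \<alpha> q)\<^sup>2) / (8 * \<sigma>\<^sup>2)) * exp (- (g\<^sup>2 * (\<beta> p - \<beta> q)\<^sup>2) / (8 * \<sigma>\<^sup>2)) =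
    exp (- (g\<^sup>2 * Wf \<sigma> \<alpha> \<beta> p q))"
  unfolding Wf_def exp_add[symmetric] using s by (simp add: field_simps)

lemma term_xk: assumes s: "\<sigma> > 0"
  shows "Re (z * ((LINT u|lborel. complex_of_real u * (fx \<sigma> g (\<alpha> p) u * cnj (fx \<sigma> g (\<alpha> q) u))) *
                 (LINT v|lborel. complex_of_real v * (hk \<sigma> g (\<beta> p) v * cnj (hk \<sigma> g (\<beta> q) v))))) =
     sqrt (2 * pi * \<sigma>\<^sup>2) * (g\<^sup>2 * ((Re (\<i> * z) * ((\<alpha> p + \<alpha> q) * (\<beta> q - \<beta> p) / (8 * \<sigma>\<^sup>2))) * exp (- (g\<^sup>2 * Wf \<sigma> \<alpha> \<beta> p q))))"
    "Re (z * ((LINT u|lborel. fx \<sigma> g (\<alpha> p) u * cnj (fx \<sigma> g (\<alpha> q) u)) *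
                 (LINT v|lborel. hk \<sigma> g (\<beta> p) v * cnj (hk \<sigma> g (\<beta> q) v)))) =
     sqrt (2 * pi * \<sigma>\<^sup>2) * (Re z * exp (- (g\<^sup>2 * Wf \<sigma> \<alpha> \<beta> p q)))"
proof -
  show "Re (z * ((LINT u|lborel. complex_of_real u * (fx \<sigma> g (\<alpha> p) u * cnj (fx \<sigma> g (\<alpha> q) u))) *
                 (LINT v|lborel. complex_of_real v * (hk \<sigma> g (\<beta> p) v * cnj (hk \<sigma> g (\<beta> q) v))))) =
     sqrt (2 * pi * \<sigma>\<^sup>2) * (g\<^sup>2 * ((Re (\<i> * z) * ((\<alpha> p + \<alpha> q) * (\<beta> q - \<beta> p) / (8 * \<sigma>\<^sup>2))) * exp (- (g\<^sup>2 * Wf \<sigma> \<alpha> \<beta> p q))))"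
    unfolding fx_int(4)[OF s] hk_int(4)[OF s] re_aux exp_W[OF s, symmetric]
    using s by (simp add: field_simps power2_eq_square)
  show "Re (z * ((LINT u|lborel. fx \<sigma> g (\<alpha> p) u * cnj (fx \<sigma> g (\<alpha> q) u)) *
                 (LINT v|lborel. hk \<sigma> g (\<beta> p) v * cnj (hk \<sigma> g (\<beta> q) v)))) =
     sqrt (2 * pi * \<sigma>\<^sup>2) * (Re z * exp (- (g\<^sup>2 * Wf \<sigma> \<alpha> \<beta> p q)))"
    unfolding fx_int(3)[OF s] hk_int(3)[OF s] re_aux3 exp_W[OF s, symmetric]
    by (simp add: field_simps)
qed

lemma term_kx: assumes s: "\<sigma> > 0"
  shows "Re (z * ((LINT u|lborel. complex_of_real u * (hk \<sigma> g (\<alpha> p) u * cnj (hk \<sigma> g (\<alpha> q) u))) *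
                 (LINT v|lborel. complex_of_real v * (fx \<sigma> g (\<beta> p) v * cnj (fx \<sigma> g (\<beta> q) v))))) =
     sqrt (2 * pi * \<sigma>\<^sup>2) * (g\<^sup>2 * ((Re (\<i> * z) * ((\<alpha> q - \<alpha> p) * (\<beta> p + \<beta> q) / (8 * \<sigma>\<^sup>2))) * exp (- (g\<^sup>2 * Wf \<sigma> \<alpha> \<beta> p q))))"
    "Re (z * ((LINT u|lborel. hk \<sigma> g (\<alpha> p) u * cnj (hk \<sigma> g (\<alpha> q) u)) *
                 (LINT v|lborel. fx \<sigma> g (\<beta> p) v * cnj (fx \<sigma> g (\<beta> q) v)))) =
     sqrt (2 * pi * \<sigma>\<^sup>2) * (Re z * exp (- (g\<^sup>2 * Wf \<sigma> \<alpha> \<beta> p q)))"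
proof -
  show "Re (z * ((LINT u|lborel. complex_of_real u * (hk \<sigma> g (\<alpha> p) u * cnj (hk \<sigma> g (\<alpha> q) u))) *
                 (LINT v|lborel. complex_of_real v * (fx \<sigma> g (\<beta> p) v * cnj (fx \<sigma> g (\<beta> q) v))))) =
     sqrt (2 * pi * \<sigma>\<^sup>2) * (g\<^sup>2 * ((Re (\<i> * z) * ((\<alpha> q - \<alpha> p) * (\<beta> p + \<beta> q) / (8 * \<sigma>\<^sup>2))) * exp (- (g\<^sup>2 * Wf \<sigma> \<alpha> \<beta> p q))))"
    unfolding fx_int(4)[OF s] hk_int(4)[OF s] re_aux2 exp_W[OF s, symmetric]
    using s by (simp add: field_simps power2_eq_square)
  show "Re (z * ((LINT u|lborel. hk \<sigma> g (\<alpha> p) u * cnj (hk \<sigma> g (\<alpha> q) u)) *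
                 (LINT v|lborel. fx \<sigma> g (\<beta> p) v * cnj (fx \<sigma> g (\<beta> q) v)))) =
     sqrt (2 * pi * \<sigma>\<^sup>2) * (Re z * exp (- (g\<^sup>2 * Wf \<sigma> \<alpha> \<beta> p q)))"
    unfolding fx_int(3)[OF s] hk_int(3)[OF s] re_aux3 exp_W[OF s, symmetric]
    by (simp add: field_simps)
qed

lemma xk_mean:
  assumes s: "\<sigma> > 0" and fin: "finite I"
  shows "mean_prod (\<lambda>x1 k2. complex_of_real (c1 \<sigma> / sqrt (2 * pi)) * (\<Sum>p\<in>I. C p * fx \<sigma> g (\<alpha> p) x1 * hk \<sigma> g (\<beta> p) k2)) =
    g\<^sup>2 * (\<Sum>p\<in>I. \<Sum>q\<in>I. (Re (\<i> * (C p * cnj (C q))) * ((\<alpha> p + \<alpha> q) * (\<beta> q - \<beta> p) / (8 * \<sigma>\<^sup>2))) * exp (- (g\<^sup>2 * Wf \<sigma> \<alpha> \<beta> p q)))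
      / (\<Sum>p\<in>I. \<Sum>q\<in>I. Re (C p * cnj (C q)) * exp (- (g\<^sup>2 * Wf \<sigma> \<alpha> \<beta> p q)))"
proof -
  have K: "complex_of_real (c1 \<sigma> / sqrt (2 * pi)) \<noteq> 0" using c1_pos[OF s] by simp
  have c0: "sqrt (2 * pi * \<sigma>\<^sup>2) > 0" using s by simp
  have num: "Re (\<Sum>p\<in>I. \<Sum>q\<in>I. C p * cnj (C q) * ((LINT u|lborel. complex_of_real u * (fx \<sigma> g (\<alpha> p) u * cnj (fx \<sigma> g (\<alpha> q) u))) *
                 (LINT v|lborel. complex_of_real v * (hk \<sigma> g (\<beta> p) v * cnj (hk \<sigma> g (\<beta> q) v))))) =
     sqrt (2 * pi * \<sigma>\<^sup>2) * (g\<^sup>2 * (\<Sum>p\<in>I. \<Sum>q\<in>I. (Re (\<i> * (C p * cnj (C q))) * (((\<alpha> p + \<alpha> q) * (\<beta> q - \<beta> p)) / (8 * \<sigma>\<^sup>2))) * exp (- (g\<^sup>2 * Wf \<sigma> \<alpha> \<beta> p q))))"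
    by (simp only: Re_sum term_xk(1)[OF s] sum_distrib_left)
  have den: "Re (\<Sum>p\<in>I. \<Sum>q\<in>I. C p * cnj (C q) * ((LINT u|lborel. fx \<sigma> g (\<alpha> p) u * cnj (fx \<sigma> g (\<alpha> q) u)) *
                 (LINT v|lborel. hk \<sigma> g (\<beta> p) v * cnj (hk \<sigma> g (\<beta> q) v)))) =
     sqrt (2 * pi * \<sigma>\<^sup>2) * (\<Sum>p\<in>I. \<Sum>q\<in>I. Re (C p * cnj (C q)) * exp (- (g\<^sup>2 * Wf \<sigma> \<alpha> \<beta> p q)))"
    by (simp only: Re_sum term_xk(2)[OF s] sum_distrib_left)
  show ?thesis
    apply (subst mean_prod_formula[OF fin K])
    apply (rule fx_int[OF s] hk_int[OF s])+
    unfolding num den using c0 by simp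
qed

lemma kx_mean:
  assumes s: "\<sigma> > 0" and fin: "finite I"
  shows "mean_prod (\<lambda>k1 x2. complex_of_real (c1 \<sigma> / sqrt (2 * pi)) * (\<Sum>p\<in>I. C p * hk \<sigma> g (\<alpha> p) k1 * fx \<sigma> g (\<beta> p) x2)) =
    g\<^sup>2 * (\<Sum>p\<in>I. \<Sum>q\<in>I. (Re (\<i> * (C p * cnj (C q))) * ((\<alpha> q - \<alpha> p) * (\<beta> p + \<beta> q) / (8 * \<sigma>\<^sup>2))) * exp (- (g\<^sup>2 * Wf \<sigma> \<alpha> \<beta> p q)))
      / (\<Sum>p\<in>I. \<Sum>q\<in>I. Re (C p * cnj (C q)) * exp (- (g\<^sup>2 * Wf \<sigma> \<alpha> \<beta> p q)))"
proof -
  have K: "complex_of_real (c1 \<sigma> / sqrt (2 * pi)) \<noteq> 0" using c1_pos[OF s] by simp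
  have c0: "sqrt (2 * pi * \<sigma>\<^sup>2) > 0" using s by simp
  have num: "Re (\<Sum>p\<in>I. \<Sum>q\<in>I. C p * cnj (C q) * ((LINT u|lborel. complex_of_real u * (hk \<sigma> g (\<alpha> p) u * cnj (hk \<sigma> g (\<alpha> q) u))) *
                 (LINT v|lborel. complex_of_real v * (fx \<sigma> g (\<beta> p) v * cnj (fx \<sigma> g (\<beta> q) v))))) =
     sqrt (2 * pi * \<sigma>\<^sup>2) * (g\<^sup>2 * (\<Sum>p\<in>I. \<Sum>q\<in>I. (Re (\<i> * (C p * cnj (C q))) * (((\<alpha> q - \<alpha> p) * (\<beta> p + \<beta> q)) / (8 * \<sigma>\<^sup>2))) * exp (- (g\<^sup>2 * Wf \<sigma> \<alpha> \<beta> p q))))"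
    by (simp only: Re_sum term_kx(1)[OF s] sum_distrib_left)
  have den: "Re (\<Sum>p\<in>I. \<Sum>q\<in>I. C p * cnj (C q) * ((LINT u|lborel. hk \<sigma> g (\<alpha> p) u * cnj (hk \<sigma> g (\<alpha> q) u)) *
                 (LINT v|lborel. fx \<sigma> g (\<beta> p) v * cnj (fx \<sigma> g (\<beta> q) v)))) =
     sqrt (2 * pi * \<sigma>\<^sup>2) * (\<Sum>p\<in>I. \<Sum>q\<in>I. Re (C p * cnj (C q)) * exp (- (g\<^sup>2 * Wf \<sigma> \<alpha> \<beta> p q)))"
    by (simp only: Re_sum term_kx(2)[OF s] sum_distrib_left)
  show ?thesis
    apply (subst mean_prod_formula[OF fin K])
    apply (rule fx_int[OF s] hk_int[OF s])+
    unfolding num den using c0 by simp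
qed

lemma dsum_prod: "(\<Sum>p\<in>I. \<Sum>q\<in>I. f p * g q) = (\<Sum>p\<in>I. f p) * (\<Sum>q\<in>I. (g q :: complex))"
  by (simp add: sum_product)

lemma S_expand:
  fixes I :: "'i set" and C :: "'i \<Rightarrow> complex" and \<alpha> \<beta> :: "'i \<Rightarrow> real"
  defines "N \<equiv> (\<Sum>p\<in>I. C p)" and "P \<equiv> (\<Sum>p\<in>I. C p * complex_of_real (\<alpha> p))"
    and "Q \<equiv> (\<Sum>p\<in>I. C p * complex_of_real (\<beta> p))"
    and "R \<equiv> (\<Sum>p\<in>I. C p * complex_of_real (\<alpha> p) * complex_of_real (\<beta> p))"
  shows "(\<Sum>p\<in>I. \<Sum>q\<in>I. C p * cnj (C q) * complex_of_real ((\<alpha> p + \<alpha> q) * (\<beta> q - \<beta> p))) =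
      P * cnj Q - R * cnj N + N * cnj R - Q * cnj P"
    "(\<Sum>p\<in>I. \<Sum>q\<in>I. C p * cnj (C q) * complex_of_real ((\<alpha> q - \<alpha> p) * (\<beta> p + \<beta> q))) =
      Q * cnj P + N * cnj R - R * cnj N - P * cnj Q"
proof -
  have cN: "cnj N = (\<Sum>q\<in>I. cnj (C q))" by (simp add: N_def cnj_sum)
  have cP: "cnj P = (\<Sum>q\<in>I. cnj (C q) * complex_of_real (\<alpha> q))" by (simp add: P_def cnj_sum)
  have cQ: "cnj Q = (\<Sum>q\<in>I. cnj (C q) * complex_of_real (\<beta> q))" by (simp add: Q_def cnj_sum)
  have cR: "cnj R = (\<Sum>q\<in>I. cnj (C q) * complex_of_real (\<alpha> q) * complex_of_real (\<beta> q))" by (simp add: R_def cnj_sum)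
  have "(\<Sum>p\<in>I. \<Sum>q\<in>I. C p * cnj (C q) * complex_of_real ((\<alpha> p + \<alpha> q) * (\<beta> q - \<beta> p))) =
     (\<Sum>p\<in>I. \<Sum>q\<in>I. (C p * complex_of_real (\<alpha> p)) * (cnj (C q) * complex_of_real (\<beta> q)))
   - (\<Sum>p\<in>I. \<Sum>q\<in>I. (C p * complex_of_real (\<alpha> p) * complex_of_real (\<beta> p)) * cnj (C q))
   + (\<Sum>p\<in>I. \<Sum>q\<in>I. C p * (cnj (C q) * complex_of_real (\<alpha> q) * complex_of_real (\<beta> q)))
   - (\<Sum>p\<in>I. \<Sum>q\<in>I. (C p * complex_of_real (\<beta> p)) * (cnj (C q) * complex_of_real (\<alpha> q)))"
    by (simp add: sum.distrib sum_subtractf algebra_simps)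
  then show "(\<Sum>p\<in>I. \<Sum>q\<in>I. C p * cnj (C q) * complex_of_real ((\<alpha> p + \<alpha> q) * (\<beta> q - \<beta> p))) =
      P * cnj Q - R * cnj N + N * cnj R - Q * cnj P"
    unfolding dsum_prod cN cP cQ cR by (simp add: N_def P_def Q_def R_def)
  have "(\<Sum>p\<in>I. \<Sum>q\<in>I. C p * cnj (C q) * complex_of_real ((\<alpha> q - \<alpha> p) * (\<beta> p + \<beta> q))) =
     (\<Sum>p\<in>I. \<Sum>q\<in>I. (C p * complex_of_real (\<beta> p)) * (cnj (C q) * complex_of_real (\<alpha> q)))
   + (\<Sum>p\<in>I. \<Sum>q\<in>I. C p * (cnj (C q) * complex_of_real (\<alpha> q) * complex_of_real (\<beta> q)))
   - (\<Sum>p\<in>I. \<Sum>q\<in>I. (C p * complex_of_real (\<alpha> p) * complex_of_real (\<beta> p)) * cnj (C q))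
   - (\<Sum>p\<in>I. \<Sum>q\<in>I. (C p * complex_of_real (\<alpha> p)) * (cnj (C q) * complex_of_real (\<beta> q)))"
    by (simp add: sum.distrib sum_subtractf algebra_simps)
  then show "(\<Sum>p\<in>I. \<Sum>q\<in>I. C p * cnj (C q) * complex_of_real ((\<alpha> q - \<alpha> p) * (\<beta> p + \<beta> q))) =
      Q * cnj P + N * cnj R - R * cnj N - P * cnj Q"
    unfolding dsum_prod cN cP cQ cR by (simp add: N_def P_def Q_def R_def)
qed

lemma im_div: "N \<noteq> 0 \<Longrightarrow> Im (R / N) = Im (R * cnj N) / (cmod N)\<^sup>2"
  by (simp add: Im_divide cmod_power2)
lemma im_div2: "N \<noteq> 0 \<Longrightarrow> Im (P / N * cnj (Q / N)) = Im (P * cnj Q) / (cmod N)\<^sup>2"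
proof -
  assume N: "N \<noteq> 0"
  have "P / N * cnj (Q / N) = (P * cnj Q) / (N * cnj N)" by (simp add: complex_cnj_divide)
  also have "N * cnj N = complex_of_real ((cmod N)\<^sup>2)" by (rule complex_norm_square[symmetric])
  finally have "P / N * cnj (Q / N) = P * cnj Q / complex_of_real ((cmod N)\<^sup>2)" .
  then show ?thesis by (simp only: Im_divide_of_real)
qed
lemma imsym: "Im (N * cnj R) = - Im (R * cnj N)" by (simp add: algebra_simps)

lemma alg:
  fixes I :: "'i set" and C :: "'i \<Rightarrow> complex" and \<alpha> \<beta> :: "'i \<Rightarrow> real"
  assumes s: "\<sigma> > 0" and Nz: "(\<Sum>p\<in>I. C p) \<noteq> 0"
  defines "N \<equiv> (\<Sum>p\<in>I. C p)" and "P \<equiv> (\<Sum>p\<in>I. C p * complex_of_real (\<alpha> p))"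
    and "Q \<equiv> (\<Sum>p\<in>I. C p * complex_of_real (\<beta> p))"
    and "R \<equiv> (\<Sum>p\<in>I. C p * complex_of_real (\<alpha> p) * complex_of_real (\<beta> p))"
  shows "(\<Sum>p\<in>I. \<Sum>q\<in>I. Re (C p * cnj (C q))) = (cmod N)\<^sup>2"
    "(\<Sum>p\<in>I. \<Sum>q\<in>I. Re (\<i> * (C p * cnj (C q))) * ((\<alpha> p + \<alpha> q) * (\<beta> q - \<beta> p) / (8 * \<sigma>\<^sup>2))) /
       (\<Sum>p\<in>I. \<Sum>q\<in>I. Re (C p * cnj (C q))) = Im (R / N - P / N * cnj (Q / N)) / (4 * \<sigma>\<^sup>2)"
    "(\<Sum>p\<in>I. \<Sum>q\<in>I. Re (\<i> * (C p * cnj (C q))) * ((\<alpha> q - \<alpha> p) * (\<beta> p + \<beta> q) / (8 * \<sigma>\<^sup>2))) /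
       (\<Sum>p\<in>I. \<Sum>q\<in>I. Re (C p * cnj (C q))) = Im (R / N + P / N * cnj (Q / N)) / (4 * \<sigma>\<^sup>2)"
proof -
  have N0: "N \<noteq> 0" using Nz by (simp add: N_def)
  have "(\<Sum>p\<in>I. \<Sum>q\<in>I. Re (C p * cnj (C q))) = Re (\<Sum>p\<in>I. \<Sum>q\<in>I. C p * cnj (C q))"
    by (simp add: Re_sum)
  also have "(\<Sum>p\<in>I. \<Sum>q\<in>I. C p * cnj (C q)) = N * cnj N"
    by (simp add: dsum_prod N_def cnj_sum)
  also have "N * cnj N = complex_of_real ((cmod N)\<^sup>2)" by (rule complex_norm_square[symmetric])
  finally show den: "(\<Sum>p\<in>I. \<Sum>q\<in>I. Re (C p * cnj (C q))) = (cmod N)\<^sup>2" by simp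
  have tr: "Re (\<i> * z) * (r / (8 * \<sigma>\<^sup>2)) = Re (\<i> * (z * complex_of_real r)) / (8 * \<sigma>\<^sup>2)" for z r
    by simp
  have np: "(cmod N)\<^sup>2 > 0" using N0 by simp
  have "(\<Sum>p\<in>I. \<Sum>q\<in>I. Re (\<i> * (C p * cnj (C q))) * ((\<alpha> p + \<alpha> q) * (\<beta> q - \<beta> p) / (8 * \<sigma>\<^sup>2))) =
     Re (\<i> * (\<Sum>p\<in>I. \<Sum>q\<in>I. C p * cnj (C q) * complex_of_real ((\<alpha> p + \<alpha> q) * (\<beta> q - \<beta> p)))) / (8 * \<sigma>\<^sup>2)"
    unfolding tr by (simp add: Re_sum sum_divide_distrib sum_distrib_left)
  also have "\<dots> = (Im (R * cnj N) - Im (P * cnj Q)) / (4 * \<sigma>\<^sup>2)"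
    unfolding S_expand(1)[where I=I and C=C and \<alpha>=\<alpha> and \<beta>=\<beta>, folded N_def P_def Q_def R_def]
    using imsym[of N R] imsym[of Q P] s by (simp add: field_simps)
  finally have numA: "(\<Sum>p\<in>I. \<Sum>q\<in>I. Re (\<i> * (C p * cnj (C q))) * ((\<alpha> p + \<alpha> q) * (\<beta> q - \<beta> p) / (8 * \<sigma>\<^sup>2))) = (Im (R * cnj N) - Im (P * cnj Q)) / (4 * \<sigma>\<^sup>2)" .
  show "(\<Sum>p\<in>I. \<Sum>q\<in>I. Re (\<i> * (C p * cnj (C q))) * ((\<alpha> p + \<alpha> q) * (\<beta> q - \<beta> p) / (8 * \<sigma>\<^sup>2))) /
       (\<Sum>p\<in>I. \<Sum>q\<in>I. Re (C p * cnj (C q))) = Im (R / N - P / N * cnj (Q / N)) / (4 * \<sigma>\<^sup>2)"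
  proof -
    have "Im (R / N - P / N * cnj (Q / N)) = Im (R / N) - Im (P / N * cnj (Q / N))" by simp
    also have "\<dots> = Im (R * cnj N) / (cmod N)\<^sup>2 - Im (P * cnj Q) / (cmod N)\<^sup>2"
      by (simp only: im_div[OF N0] im_div2[OF N0])
    finally have e: "Im (R / N - P / N * cnj (Q / N)) = Im (R * cnj N) / (cmod N)\<^sup>2 - Im (P * cnj Q) / (cmod N)\<^sup>2" .
    show ?thesis unfolding den e numA using np s by (simp add: field_simps)
  qed
  have "(\<Sum>p\<in>I. \<Sum>q\<in>I. Re (\<i> * (C p * cnj (C q))) * ((\<alpha> q - \<alpha> p) * (\<beta> p + \<beta> q) / (8 * \<sigma>\<^sup>2))) =
     Re (\<i> * (\<Sum>p\<in>I. \<Sum>q\<in>I. C p * cnj (C q) * complex_of_real ((\<alpha> q - \<alpha> p) * (\<beta> p + \<beta> q)))) / (8 * \<sigma>\<^sup>2)"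
    unfolding tr by (simp add: Re_sum sum_divide_distrib sum_distrib_left)
  also have "\<dots> = (Im (R * cnj N) + Im (P * cnj Q)) / (4 * \<sigma>\<^sup>2)"
    unfolding S_expand(2)[where I=I and C=C and \<alpha>=\<alpha> and \<beta>=\<beta>, folded N_def P_def Q_def R_def]
    using imsym[of N R] imsym[of Q P] s by (simp add: field_simps)
  finally have numB: "(\<Sum>p\<in>I. \<Sum>q\<in>I. Re (\<i> * (C p * cnj (C q))) * ((\<alpha> q - \<alpha> p) * (\<beta> p + \<beta> q) / (8 * \<sigma>\<^sup>2))) = (Im (R * cnj N) + Im (P * cnj Q)) / (4 * \<sigma>\<^sup>2)" .
  show "(\<Sum>p\<in>I. \<Sum>q\<in>I. Re (\<i> * (C p * cnj (C q))) * ((\<alpha> q - \<alpha> p) * (\<beta> p + \<beta> q) / (8 * \<sigma>\<^sup>2))) /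
       (\<Sum>p\<in>I. \<Sum>q\<in>I. Re (C p * cnj (C q))) = Im (R / N + P / N * cnj (Q / N)) / (4 * \<sigma>\<^sup>2)"
  proof -
    have "Im (R / N + P / N * cnj (Q / N)) = Im (R / N) + Im (P / N * cnj (Q / N))" by simp
    also have "\<dots> = Im (R * cnj N) / (cmod N)\<^sup>2 + Im (P * cnj Q) / (cmod N)\<^sup>2"
      by (simp only: im_div[OF N0] im_div2[OF N0])
    finally have e: "Im (R / N + P / N * cnj (Q / N)) = Im (R * cnj N) / (cmod N)\<^sup>2 + Im (P * cnj Q) / (cmod N)\<^sup>2" .
    show ?thesis unfolding den e numB using np s by (simp add: field_simps)
  qed
qed


lemma physics_decomp:
  fixes T :: "real \<Rightarrow> real \<Rightarrow> complex ^ 'n ^ 'n"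
    and A1 A2 :: "complex ^ 'n ^ 'n"
    and psi_i psi_f :: "complex ^ 'n"
  assumes times: "ti < t1" "t1 < t2" "t2 < tf"
    and compose: "\<And>a b c. a \<le> b \<Longrightarrow> b \<le> c \<Longrightarrow> T c b ** T b a = T c a"
    and sa1: "self_adjoint A1" and sa2: "self_adjoint A2"
  obtains I :: "((complex^'n) \<times> (complex^'n)) set" and C :: "(complex^'n) \<times> (complex^'n) \<Rightarrow> complex"
    and \<alpha> \<beta> :: "(complex^'n) \<times> (complex^'n) \<Rightarrow> real" where "finite I"
    "braket psi_f (T tf ti *v psi_i) = (\<Sum>p\<in>I. C p)"
    "braket psi_f (T tf t1 *v (A1 *v (T t1 ti *v psi_i))) = (\<Sum>p\<in>I. C p * complex_of_real (\<alpha> p))"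
    "braket psi_f (T tf t2 *v (A2 *v (T t2 ti *v psi_i))) = (\<Sum>p\<in>I. C p * complex_of_real (\<beta> p))"
    "braket psi_f (T tf t2 *v (A2 *v (T t2 t1 *v (A1 *v (T t1 ti *v psi_i))))) =
       (\<Sum>p\<in>I. C p * complex_of_real (\<alpha> p) * complex_of_real (\<beta> p))"
    "\<And>g k1 k2. Phi_kk T ti t1 t2 tf psi_i psi_f A1 A2 \<sigma> g k1 k2 =
       (\<Sum>p\<in>I. C p * exp ((- \<i> * complex_of_real (g * k1)) * complex_of_real (\<alpha> p)) *
          exp ((- \<i> * complex_of_real (g * k2)) * complex_of_real (\<beta> p))) * complex_of_real (phi_k \<sigma> k1) * complex_of_real (phi_k \<sigma> k2)"
proof -
  obtain E1 lam1 where fin1: "finite E1" and dec1: "\<And>v. v = (\<Sum>e\<in>E1. braket e v *s e)"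
    and eig1: "\<And>e. e \<in> E1 \<Longrightarrow> A1 *v e = complex_of_real (lam1 e) *s e"
    using spectral[OF sa1] by blast
  obtain E2 lam2 where fin2: "finite E2" and dec2: "\<And>v. v = (\<Sum>e\<in>E2. braket e v *s e)"
    and eig2: "\<And>e. e \<in> E2 \<Longrightarrow> A2 *v e = complex_of_real (lam2 e) *s e"
    using spectral[OF sa2] by blast
  define C where "C = Cf psi_i psi_f (T t1 ti) (T t2 t1) (T tf t2)"
  define \<alpha> where "\<alpha> p = lam1 (fst p)" for p :: "(complex^'n) \<times> (complex^'n)"
  define \<beta> where "\<beta> p = lam2 (snd p)" for p :: "(complex^'n) \<times> (complex^'n)"
  have id1: "\<And>x. (\<lambda>x. x) x = (\<Sum>e\<in>E1. ((\<lambda>_. 1) e * braket e x) *s e)" using dec1 by simp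
  have id2: "\<And>x. (\<lambda>x. x) x = (\<Sum>e\<in>E2. ((\<lambda>_. 1) e * braket e x) *s e)" using dec2 by simp
  have Ad1: "\<And>x. (\<lambda>x. A1 *v x) x = (\<Sum>e\<in>E1. ((\<lambda>e. complex_of_real (lam1 e)) e * braket e x) *s e)"
  proof -
    fix x
    have "A1 *v x = A1 *v (\<Sum>e\<in>E1. braket e x *s e)" using dec1[of x] by simp
    also have "\<dots> = (\<Sum>e\<in>E1. (complex_of_real (lam1 e) * braket e x) *s e)"
      by (simp add: mv_sum mv_smult eig1 vector_smult_assoc mult.commute)
    finally show "(\<lambda>x. A1 *v x) x = (\<Sum>e\<in>E1. ((\<lambda>e. complex_of_real (lam1 e)) e * braket e x) *s e)" by simp
  qed
  have Ad2: "\<And>x. (\<lambda>x. A2 *v x) x = (\<Sum>e\<in>E2. ((\<lambda>e. complex_of_real (lam2 e)) e * braket e x) *s e)"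
  proof -
    fix x
    have "A2 *v x = A2 *v (\<Sum>e\<in>E2. braket e x *s e)" using dec2[of x] by simp
    also have "\<dots> = (\<Sum>e\<in>E2. (complex_of_real (lam2 e) * braket e x) *s e)"
      by (simp add: mv_sum mv_smult eig2 vector_smult_assoc mult.commute)
    finally show "(\<lambda>x. A2 *v x) x = (\<Sum>e\<in>E2. ((\<lambda>e. complex_of_real (lam2 e)) e * braket e x) *s e)" by simp
  qed
  have Mx1: "\<And>x. (\<lambda>x. mexp (cscale_mat c A1) *v x) x = (\<Sum>e\<in>E1. ((\<lambda>e. exp (c * complex_of_real (lam1 e))) e * braket e x) *s e)" for c
    using mexp_mv[OF fin1 dec1 eig1] by simp
  have Mx2: "\<And>x. (\<lambda>x. mexp (cscale_mat c A2) *v x) x = (\<Sum>e\<in>E2. ((\<lambda>e. exp (c * complex_of_real (lam2 e))) e * braket e x) *s e)" for c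
    using mexp_mv[OF fin2 dec2 eig2] by simp
  have T2i: "T t2 ti = T t2 t1 ** T t1 ti" using compose[of ti t1 t2] times by simp
  have Tf1: "T tf t1 = T tf t2 ** T t2 t1" using compose[of t1 t2 tf] times by simp
  have Tfi: "T tf ti = T tf t2 ** T t2 ti" using compose[of ti t2 tf] times by simp
  have finI: "finite (E1 \<times> E2)" using fin1 fin2 by simp
  have "braket psi_f (T tf ti *v psi_i) = (\<Sum>p\<in>E1 \<times> E2. C p)"
  proof -
    have "braket psi_f (T tf ti *v psi_i) = braket psi_f (T tf t2 *v (\<lambda>x. x) (T t2 t1 *v (\<lambda>x. x) (T t1 ti *v psi_i)))"
      by (simp add: Tfi T2i matrix_vector_mul_assoc)
    also have "\<dots> = (\<Sum>p\<in>E1 \<times> E2. C p * 1 * 1)"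
      unfolding C_def by (rule amp[of _ _ "\<lambda>x. x" _ "\<lambda>x. x", OF fin1 fin2 id1 id2])
    finally show ?thesis by simp
  qed
  moreover have "braket psi_f (T tf t1 *v (A1 *v (T t1 ti *v psi_i))) = (\<Sum>p\<in>E1 \<times> E2. C p * complex_of_real (\<alpha> p))"
  proof -
    have "braket psi_f (T tf t1 *v (A1 *v (T t1 ti *v psi_i))) = braket psi_f (T tf t2 *v (\<lambda>x. x) (T t2 t1 *v (\<lambda>x. A1 *v x) (T t1 ti *v psi_i)))"
      by (simp add: Tf1 matrix_vector_mul_assoc matrix_mul_assoc)
    also have "\<dots> = (\<Sum>p\<in>E1 \<times> E2. C p * complex_of_real (lam1 (fst p)) * 1)"
      unfolding C_def by (rule amp[of _ _ "\<lambda>x. A1 *v x" _ "\<lambda>x. x", OF fin1 fin2 Ad1 id2])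
    finally show ?thesis by (simp add: \<alpha>_def)
  qed
  moreover have "braket psi_f (T tf t2 *v (A2 *v (T t2 ti *v psi_i))) = (\<Sum>p\<in>E1 \<times> E2. C p * complex_of_real (\<beta> p))"
  proof -
    have "braket psi_f (T tf t2 *v (A2 *v (T t2 ti *v psi_i))) = braket psi_f (T tf t2 *v (\<lambda>x. A2 *v x) (T t2 t1 *v (\<lambda>x. x) (T t1 ti *v psi_i)))"
      by (simp add: T2i matrix_vector_mul_assoc)
    also have "\<dots> = (\<Sum>p\<in>E1 \<times> E2. C p * 1 * complex_of_real (lam2 (snd p)))"
      unfolding C_def by (rule amp[of _ _ "\<lambda>x. x" _ "\<lambda>x. A2 *v x", OF fin1 fin2 id1 Ad2])
    finally show ?thesis by (simp add: \<beta>_def)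
  qed
  moreover have "braket psi_f (T tf t2 *v (A2 *v (T t2 t1 *v (A1 *v (T t1 ti *v psi_i))))) =
       (\<Sum>p\<in>E1 \<times> E2. C p * complex_of_real (\<alpha> p) * complex_of_real (\<beta> p))"
    unfolding C_def \<alpha>_def \<beta>_def
    by (rule amp[of _ _ "\<lambda>x. A1 *v x" _ "\<lambda>x. A2 *v x", OF fin1 fin2 Ad1 Ad2])
  moreover have "Phi_kk T ti t1 t2 tf psi_i psi_f A1 A2 \<sigma> g k1 k2 =
       (\<Sum>p\<in>E1 \<times> E2. C p * exp ((- \<i> * complex_of_real (g * k1)) * complex_of_real (\<alpha> p)) *
          exp ((- \<i> * complex_of_real (g * k2)) * complex_of_real (\<beta> p))) * complex_of_real (phi_k \<sigma> k1) * complex_of_real (phi_k \<sigma> k2)"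
    for g k1 k2
  proof -
    have "braket psi_f (T tf t2 *v (mexp (cscale_mat (- \<i> * complex_of_real (g * k2)) A2) *v
       (T t2 t1 *v (mexp (cscale_mat (- \<i> * complex_of_real (g * k1)) A1) *v (T t1 ti *v psi_i))))) =
       (\<Sum>p\<in>E1 \<times> E2. C p * exp ((- \<i> * complex_of_real (g * k1)) * complex_of_real (\<alpha> p)) *
          exp ((- \<i> * complex_of_real (g * k2)) * complex_of_real (\<beta> p)))"
      unfolding C_def \<alpha>_def \<beta>_def
      by (rule amp[of _ _ "\<lambda>x. mexp (cscale_mat (- \<i> * complex_of_real (g * k1)) A1) *v x" _
           "\<lambda>x. mexp (cscale_mat (- \<i> * complex_of_real (g * k2)) A2) *v x", OF fin1 fin2 Mx1 Mx2])
    then show ?thesis unfolding Phi_kk_def by simp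
  qed
  ultimately show ?thesis using that[OF finI] by blast
qed

lemma main_core:
  fixes T :: "real \<Rightarrow> real \<Rightarrow> complex ^ 'n ^ 'n"
    and ti t1 t2 tf :: real
    and A1 A2 :: "complex ^ 'n ^ 'n"
    and psi_i psi_f :: "complex ^ 'n"
    and \<sigma> :: real
    and I :: "((complex^'n) \<times> (complex^'n)) set" and C :: "(complex^'n) \<times> (complex^'n) \<Rightarrow> complex"
    and \<alpha> \<beta> :: "(complex^'n) \<times> (complex^'n) \<Rightarrow> real"
  assumes nonorth: "braket psi_f (T tf ti *v psi_i) \<noteq> 0"
    and sigma_pos: "\<sigma> > 0"
    and finI: "finite I"
    and hN: "braket psi_f (T tf ti *v psi_i) = (\<Sum>p\<in>I. C p)"
    and hP: "braket psi_f (T tf t1 *v (A1 *v (T t1 ti *v psi_i))) = (\<Sum>p\<in>I. C p * complex_of_real (\<alpha> p))"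
    and hQ: "braket psi_f (T tf t2 *v (A2 *v (T t2 ti *v psi_i))) = (\<Sum>p\<in>I. C p * complex_of_real (\<beta> p))"
    and hR: "braket psi_f (T tf t2 *v (A2 *v (T t2 t1 *v (A1 *v (T t1 ti *v psi_i))))) =
       (\<Sum>p\<in>I. C p * complex_of_real (\<alpha> p) * complex_of_real (\<beta> p))"
    and hkk: "\<And>g k1 k2. Phi_kk T ti t1 t2 tf psi_i psi_f A1 A2 \<sigma> g k1 k2 =
       (\<Sum>p\<in>I. C p * exp ((- \<i> * complex_of_real (g * k1)) * complex_of_real (\<alpha> p)) *
          exp ((- \<i> * complex_of_real (g * k2)) * complex_of_real (\<beta> p))) * complex_of_real (phi_k \<sigma> k1) * complex_of_real (phi_k \<sigma> k2)"
  shows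
    "(\<lambda>g. mean_prod (Phi_xk T ti t1 t2 tf psi_i psi_f A1 A2 \<sigma> g)
        - g\<^sup>2 / (4 * \<sigma>\<^sup>2) * Im (seq_weak_value T ti t1 t2 tf psi_i psi_f A2 A1
            - weak_value T ti tf psi_i psi_f A1 t1 * cnj (weak_value T ti tf psi_i psi_f A2 t2)))
      \<in> O[at_right 0](\<lambda>g. g ^ 3)
   \<and> (\<lambda>g. mean_prod (Phi_kx T ti t1 t2 tf psi_i psi_f A1 A2 \<sigma> g)
        - g\<^sup>2 / (4 * \<sigma>\<^sup>2) * Im (seq_weak_value T ti t1 t2 tf psi_i psi_f A2 A1
            + weak_value T ti tf psi_i psi_f A1 t1 * cnj (weak_value T ti tf psi_i psi_f A2 t2)))
      \<in> O[at_right 0](\<lambda>g. g ^ 3)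
   \<and> (\<lambda>g. Im (seq_weak_value T ti t1 t2 tf psi_i psi_f A2 A1)
        - 2 * \<sigma>\<^sup>2 / g\<^sup>2 * (mean_prod (Phi_xk T ti t1 t2 tf psi_i psi_f A1 A2 \<sigma> g)
                             + mean_prod (Phi_kx T ti t1 t2 tf psi_i psi_f A1 A2 \<sigma> g)))
      \<in> O[at_right 0](\<lambda>g. g)"
proof -
  have sp: "\<sigma> > 0" by (rule sigma_pos)
  define N where "N = (\<Sum>p\<in>I. C p)"
  define P where "P = (\<Sum>p\<in>I. C p * complex_of_real (\<alpha> p))"
  define Q where "Q = (\<Sum>p\<in>I. C p * complex_of_real (\<beta> p))"
  define R where "R = (\<Sum>p\<in>I. C p * complex_of_real (\<alpha> p) * complex_of_real (\<beta> p))"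
  have Nz: "(\<Sum>p\<in>I. C p) \<noteq> 0" using nonorth hN by simp
  have wv1: "weak_value T ti tf psi_i psi_f A1 t1 = P / N"
    by (simp add: weak_value_def hN hP N_def P_def)
  have wv2: "weak_value T ti tf psi_i psi_f A2 t2 = Q / N"
    by (simp add: weak_value_def hN hQ N_def Q_def)
  have sw: "seq_weak_value T ti t1 t2 tf psi_i psi_f A2 A1 = R / N"
    by (simp add: seq_weak_value_def hN hR N_def R_def)
  have xk: "Phi_xk T ti t1 t2 tf psi_i psi_f A1 A2 \<sigma> g =
      (\<lambda>x1 k2. complex_of_real (c1 \<sigma> / sqrt (2 * pi)) * (\<Sum>p\<in>I. C p * fx \<sigma> g (\<alpha> p) x1 * hk \<sigma> g (\<beta> p) k2))" for g
    by (intro ext) (simp only: Phi_xk_def xk_form[OF sp finI hkk])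
  have kx: "Phi_kx T ti t1 t2 tf psi_i psi_f A1 A2 \<sigma> g =
      (\<lambda>k1 x2. complex_of_real (c1 \<sigma> / sqrt (2 * pi)) * (\<Sum>p\<in>I. C p * hk \<sigma> g (\<alpha> p) k1 * fx \<sigma> g (\<beta> p) x2))" for g
    by (intro ext) (simp only: Phi_kx_def kx_form[OF sp finI hkk])
  define B0 where "B0 = (\<Sum>p\<in>I. \<Sum>q\<in>I. Re (C p * cnj (C q)))"
  have B0nz: "B0 \<noteq> 0" unfolding B0_def alg(1)[OF sp Nz] using Nz by simp
  have K1: "(\<Sum>p\<in>I. \<Sum>q\<in>I. Re (\<i> * (C p * cnj (C q))) * ((\<alpha> p + \<alpha> q) * (\<beta> q - \<beta> p) / (8 * \<sigma>\<^sup>2))) / B0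
      = Im (R / N - P / N * cnj (Q / N)) / (4 * \<sigma>\<^sup>2)"
    unfolding B0_def N_def P_def Q_def R_def by (rule alg(2)[OF sp Nz])
  have K2: "(\<Sum>p\<in>I. \<Sum>q\<in>I. Re (\<i> * (C p * cnj (C q))) * ((\<alpha> q - \<alpha> p) * (\<beta> p + \<beta> q) / (8 * \<sigma>\<^sup>2))) / B0
      = Im (R / N + P / N * cnj (Q / N)) / (4 * \<sigma>\<^sup>2)"
    unfolding B0_def N_def P_def Q_def R_def by (rule alg(3)[OF sp Nz])
  note as1 = asym[where a = "\<lambda>p q. Re (\<i> * (C p * cnj (C q))) * ((\<alpha> p + \<alpha> q) * (\<beta> q - \<beta> p) / (8 * \<sigma>\<^sup>2))"
     and b = "\<lambda>p q. Re (C p * cnj (C q))" and w = "Wf \<sigma> \<alpha> \<beta>", OF finI B0nz[unfolded B0_def]]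
  note as2 = asym[where a = "\<lambda>p q. Re (\<i> * (C p * cnj (C q))) * ((\<alpha> q - \<alpha> p) * (\<beta> p + \<beta> q) / (8 * \<sigma>\<^sup>2))"
     and b = "\<lambda>p q. Re (C p * cnj (C q))" and w = "Wf \<sigma> \<alpha> \<beta>", OF finI B0nz[unfolded B0_def]]
  have m1: "mean_prod (Phi_xk T ti t1 t2 tf psi_i psi_f A1 A2 \<sigma> g) = g\<^sup>2 * (\<Sum>p\<in>I. \<Sum>q\<in>I. (Re (\<i> * (C p * cnj (C q))) * ((\<alpha> p + \<alpha> q) * (\<beta> q - \<beta> p) / (8 * \<sigma>\<^sup>2))) * exp (- (g\<^sup>2 * Wf \<sigma> \<alpha> \<beta> p q))) / (\<Sum>p\<in>I. \<Sum>q\<in>I. Re (C p * cnj (C q)) * exp (- (g\<^sup>2 * Wf \<sigma> \<alpha> \<beta> p q)))" for g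
    by (simp only: xk xk_mean[OF sp finI])
  have m2: "mean_prod (Phi_kx T ti t1 t2 tf psi_i psi_f A1 A2 \<sigma> g) = g\<^sup>2 * (\<Sum>p\<in>I. \<Sum>q\<in>I. (Re (\<i> * (C p * cnj (C q))) * ((\<alpha> q - \<alpha> p) * (\<beta> p + \<beta> q) / (8 * \<sigma>\<^sup>2))) * exp (- (g\<^sup>2 * Wf \<sigma> \<alpha> \<beta> p q))) / (\<Sum>p\<in>I. \<Sum>q\<in>I. Re (C p * cnj (C q)) * exp (- (g\<^sup>2 * Wf \<sigma> \<alpha> \<beta> p q)))" for g
    by (simp only: kx kx_mean[OF sp finI])
  have h1: "(\<lambda>g. mean_prod (Phi_xk T ti t1 t2 tf psi_i psi_f A1 A2 \<sigma> g)
        - g\<^sup>2 / (4 * \<sigma>\<^sup>2) * Im (seq_weak_value T ti t1 t2 tf psi_i psi_f A2 A1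
            - weak_value T ti tf psi_i psi_f A1 t1 * cnj (weak_value T ti tf psi_i psi_f A2 t2)))
      \<in> O[at_right 0](\<lambda>g. g ^ 3)"
  proof -
    have "(\<lambda>g. mean_prod (Phi_xk T ti t1 t2 tf psi_i psi_f A1 A2 \<sigma> g)
        - g\<^sup>2 / (4 * \<sigma>\<^sup>2) * Im (seq_weak_value T ti t1 t2 tf psi_i psi_f A2 A1
            - weak_value T ti tf psi_i psi_f A1 t1 * cnj (weak_value T ti tf psi_i psi_f A2 t2))) =
       (\<lambda>g. g\<^sup>2 * (\<Sum>p\<in>I. \<Sum>q\<in>I. (Re (\<i> * (C p * cnj (C q))) * ((\<alpha> p + \<alpha> q) * (\<beta> q - \<beta> p) / (8 * \<sigma>\<^sup>2))) * exp (- (g\<^sup>2 * Wf \<sigma> \<alpha> \<beta> p q))) / (\<Sum>p\<in>I. \<Sum>q\<in>I. Re (C p * cnj (C q)) * exp (- (g\<^sup>2 * Wf \<sigma> \<alpha> \<beta> p q))) - g\<^sup>2 * ((\<Sum>p\<in>I. \<Sum>q\<in>I. Re (\<i> * (C p * cnj (C q))) * ((\<alpha> p + \<alpha> q) * (\<beta> q - \<beta> p) / (8 * \<sigma>\<^sup>2))) / (\<Sum>p\<in>I. \<Sum>q\<in>I. Re (C p * cnj (C q)))))"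
      unfolding m1 sw wv1 wv2 K1[unfolded B0_def] by simp
    then show ?thesis using as1 by simp
  qed
  have h2: "(\<lambda>g. mean_prod (Phi_kx T ti t1 t2 tf psi_i psi_f A1 A2 \<sigma> g)
        - g\<^sup>2 / (4 * \<sigma>\<^sup>2) * Im (seq_weak_value T ti t1 t2 tf psi_i psi_f A2 A1
            + weak_value T ti tf psi_i psi_f A1 t1 * cnj (weak_value T ti tf psi_i psi_f A2 t2)))
      \<in> O[at_right 0](\<lambda>g. g ^ 3)"
  proof -
    have "(\<lambda>g. mean_prod (Phi_kx T ti t1 t2 tf psi_i psi_f A1 A2 \<sigma> g)
        - g\<^sup>2 / (4 * \<sigma>\<^sup>2) * Im (seq_weak_value T ti t1 t2 tf psi_i psi_f A2 A1
            + weak_value T ti tf psi_i psi_f A1 t1 * cnj (weak_value T ti tf psi_i psi_f A2 t2))) =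
       (\<lambda>g. g\<^sup>2 * (\<Sum>p\<in>I. \<Sum>q\<in>I. (Re (\<i> * (C p * cnj (C q))) * ((\<alpha> q - \<alpha> p) * (\<beta> p + \<beta> q) / (8 * \<sigma>\<^sup>2))) * exp (- (g\<^sup>2 * Wf \<sigma> \<alpha> \<beta> p q))) / (\<Sum>p\<in>I. \<Sum>q\<in>I. Re (C p * cnj (C q)) * exp (- (g\<^sup>2 * Wf \<sigma> \<alpha> \<beta> p q))) - g\<^sup>2 * ((\<Sum>p\<in>I. \<Sum>q\<in>I. Re (\<i> * (C p * cnj (C q))) * ((\<alpha> q - \<alpha> p) * (\<beta> p + \<beta> q) / (8 * \<sigma>\<^sup>2))) / (\<Sum>p\<in>I. \<Sum>q\<in>I. Re (C p * cnj (C q)))))"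
      unfolding m2 sw wv1 wv2 K2[unfolded B0_def] by simp
    then show ?thesis using as2 by simp
  qed
  define M1 where "M1 g = mean_prod (Phi_xk T ti t1 t2 tf psi_i psi_f A1 A2 \<sigma> g)" for g
  define M2 where "M2 g = mean_prod (Phi_kx T ti t1 t2 tf psi_i psi_f A1 A2 \<sigma> g)" for g
  define s where "s = seq_weak_value T ti t1 t2 tf psi_i psi_f A2 A1"
  define z where "z = weak_value T ti tf psi_i psi_f A1 t1 * cnj (weak_value T ti tf psi_i psi_f A2 t2)"
  define e1 where "e1 g = M1 g - g\<^sup>2 / (4 * \<sigma>\<^sup>2) * Im (s - z)" for g
  define e2 where "e2 g = M2 g - g\<^sup>2 / (4 * \<sigma>\<^sup>2) * Im (s + z)" for g
  have he1: "e1 \<in> O[at_right 0](\<lambda>g. g ^ 3)" using h1 unfolding e1_def M1_def s_def z_def .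
  have he2: "e2 \<in> O[at_right 0](\<lambda>g. g ^ 3)" using h2 unfolding e2_def M2_def s_def z_def .
  have S: "(\<lambda>g. e1 g + e2 g) \<in> O[at_right 0](\<lambda>g. g ^ 3)" by (rule sum_in_bigo(1)[OF he1 he2])
  have "(\<lambda>g. (1 / g\<^sup>2) * (e1 g + e2 g)) \<in> O[at_right 0](\<lambda>g. (1 / g\<^sup>2) * g ^ 3)"
    by (rule landau_o.big.mult[OF landau_o.big_refl S])
  moreover have "(\<lambda>g::real. (1 / g\<^sup>2) * g ^ 3) \<in> O[at_right 0](\<lambda>g. g)"
  proof (rule bigoI[where c = 1])
    show "\<forall>\<^sub>F g in at_right 0. norm ((1 / (g::real)\<^sup>2) * g ^ 3) \<le> 1 * norm g"
      using eventually_at_right_less[of "0::real"]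
      by eventually_elim (simp add: power2_eq_square power3_eq_cube)
  qed
  ultimately have "(\<lambda>g. (1 / g\<^sup>2) * (e1 g + e2 g)) \<in> O[at_right 0](\<lambda>g. g)"
    by (rule landau_o.big_trans)
  then have "(\<lambda>g. (- (2 * \<sigma>\<^sup>2)) * ((1 / g\<^sup>2) * (e1 g + e2 g))) \<in> O[at_right 0](\<lambda>g. 1 * g)"
    by (rule landau_o.big.mult[OF bigo_const])
  then have L3: "(\<lambda>g. (- (2 * \<sigma>\<^sup>2)) * ((1 / g\<^sup>2) * (e1 g + e2 g))) \<in> O[at_right 0](\<lambda>g. g)" by simp
  have ev: "\<forall>\<^sub>F g in at_right 0. (- (2 * \<sigma>\<^sup>2)) * ((1 / g\<^sup>2) * (e1 g + e2 g)) = Im s - 2 * \<sigma>\<^sup>2 / g\<^sup>2 * (M1 g + M2 g)"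
    using eventually_at_right_less[of "0::real"]
  proof eventually_elim
    case (elim g)
    have "Im (s - z) + Im (s + z) = 2 * Im s" by simp
    then show ?case using elim sp unfolding e1_def e2_def by (simp add: field_simps)
  qed
  have h3: "(\<lambda>g. Im s - 2 * \<sigma>\<^sup>2 / g\<^sup>2 * (M1 g + M2 g)) \<in> O[at_right 0](\<lambda>g. g)"
    using landau_o.big.in_cong[OF ev] L3 by simp
  show ?thesis
    using h1 h2 h3 unfolding M1_def M2_def s_def by blast
qed

theorem mainTheorem8:
  fixes T :: "real \<Rightarrow> real \<Rightarrow> complex ^ 'n ^ 'n"
    and ti t1 t2 tf :: real
    and A1 A2 :: "complex ^ 'n ^ 'n"
    and psi_i psi_f :: "complex ^ 'n"
    and \<sigma> :: real
  assumes times: "ti < t1" "t1 < t2" "t2 < tf"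
    and unitary: "\<And>a b. unitary_mat (T b a)"
    and compose: "\<And>a b c. a \<le> b \<Longrightarrow> b \<le> c \<Longrightarrow> T c b ** T b a = T c a"
    and sa1: "self_adjoint A1" and sa2: "self_adjoint A2"
    and unit_i: "braket psi_i psi_i = 1" and unit_f: "braket psi_f psi_f = 1"
    and nonorth: "braket psi_f (T tf ti *v psi_i) \<noteq> 0"
    and sigma_pos: "\<sigma> > 0"
  shows
    "(\<lambda>g. mean_prod (Phi_xk T ti t1 t2 tf psi_i psi_f A1 A2 \<sigma> g)
        - g\<^sup>2 / (4 * \<sigma>\<^sup>2) * Im (seq_weak_value T ti t1 t2 tf psi_i psi_f A2 A1
            - weak_value T ti tf psi_i psi_f A1 t1 * cnj (weak_value T ti tf psi_i psi_f A2 t2)))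
      \<in> O[at_right 0](\<lambda>g. g ^ 3)
   \<and> (\<lambda>g. mean_prod (Phi_kx T ti t1 t2 tf psi_i psi_f A1 A2 \<sigma> g)
        - g\<^sup>2 / (4 * \<sigma>\<^sup>2) * Im (seq_weak_value T ti t1 t2 tf psi_i psi_f A2 A1
            + weak_value T ti tf psi_i psi_f A1 t1 * cnj (weak_value T ti tf psi_i psi_f A2 t2)))
      \<in> O[at_right 0](\<lambda>g. g ^ 3)
   \<and> (\<lambda>g. Im (seq_weak_value T ti t1 t2 tf psi_i psi_f A2 A1)
        - 2 * \<sigma>\<^sup>2 / g\<^sup>2 * (mean_prod (Phi_xk T ti t1 t2 tf psi_i psi_f A1 A2 \<sigma> g)
                             + mean_prod (Phi_kx T ti t1 t2 tf psi_i psi_f A1 A2 \<sigma> g)))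
      \<in> O[at_right 0](\<lambda>g. g)"
  apply (rule physics_decomp[where T = T and \<sigma> = \<sigma> and psi_i = psi_i and psi_f = psi_f, OF times compose sa1 sa2])
  apply assumption
  apply assumption
  apply (rule main_core)
  apply (rule nonorth)
  apply (rule sigma_pos)
  apply assumption+
  done

end
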